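(* Let $m,s$ be positive integers and $t,r$ integers with $r^s\equiv 1\pmod m$ and $m\mid t(r-1)$, and let $G=\langle a,b\mid a^m=1,\ b^s=a^t,\ b^{-1}ab=a^r\rangle$. If $(m,r-1)\mid t$, then $G$ is the active sum of the family consisting of $\langle a\rangle$, $\langle b\rangle$ and all their conjugates in $G$.
   Context: $(x,y)$ denotes the greatest common divisor (with $(m,0)=m$). Such a group is finite metacyclic with $a$ of order $m$. For a group $G$ and a family $\mathcal{F}$ of distinct subgroups that generates $G$ and is closed under conjugation, the active sum $S$ of $\mathcal{F}$ is the free product of the members of $\mathcal{F}$ divided by the normal subgroup generated by all elements $h^{-1}\cdot g\cdot h\cdot (g^h)^{-1}$ with $h\in F_1$, $g\in F_2$, $F_1,F_2\in\mathcal{F}$, where $g^h=h^{-1}gh$ is regarded as an element of the factor $h^{-1}F_2h\in\mathcal{F}$. The inclusions induce a canonical surjection $\varphi:S\to G$, and "$G$ is the active sum of $\mathcal{F}$" means $\varphi$ is an isomorphism. *)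

theory Defs
  imports "HOL-Algebra.Algebra"
begin

inductive word_cong :: "('l list \<times> 'l list) set \<Rightarrow> 'l list \<Rightarrow> 'l list \<Rightarrow> bool"
  for Rl where
  base: "(u, v) \<in> Rl \<Longrightarrow> word_cong Rl u v"
| refl: "word_cong Rl u u"
| sym: "word_cong Rl u v \<Longrightarrow> word_cong Rl v u"
| trans: "word_cong Rl u v \<Longrightarrow> word_cong Rl v w \<Longrightarrow> word_cong Rl u w"
| ctxt: "word_cong Rl u v \<Longrightarrow> word_cong Rl (x @ u @ y) (x @ v @ y)"

definition word_class :: "'l set \<Rightarrow> ('l list \<times> 'l list) set \<Rightarrow> 'l list \<Rightarrow> 'l list set" where
  "word_class Xl Rl w = {v. set v \<subseteq> Xl \<and> word_cong Rl v w}"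

definition word_monoid :: "'l set \<Rightarrow> ('l list \<times> 'l list) set \<Rightarrow> 'l list set monoid" where
  "word_monoid Xl Rl =
     \<lparr> carrier = word_class Xl Rl ` {w. set w \<subseteq> Xl},
       monoid.mult = (\<lambda>A B. {w. set w \<subseteq> Xl \<and> (\<exists>u\<in>A. \<exists>v\<in>B. word_cong Rl w (u @ v))}),
       one = word_class Xl Rl [] \<rparr>"

text \<open>Letters are (generator, inverted?) pairs; the free-group relations x x^-1 = 1 = x^-1 x
  are added to the given defining relations (pairs of words to be identified).\<close>
definition free_rels :: "'g set \<Rightarrow> (('g \<times> bool) list \<times> ('g \<times> bool) list) set" where
  "free_rels Xl = {([(x, e), (x, \<not> e)], []) | x e. x \<in> Xl}"

definition presented_group ::
  "'g set \<Rightarrow> (('g \<times> bool) list \<times> ('g \<times> bool) list) set \<Rightarrow> ('g \<times> bool) list set monoid" where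
  "presented_group Xl Rel = word_monoid (Xl \<times> UNIV) (free_rels Xl \<union> Rel)"

definition wpow :: "'g \<Rightarrow> int \<Rightarrow> ('g \<times> bool) list" where
  "wpow x k = (if 0 \<le> k then replicate (nat k) (x, False) else replicate (nat (- k)) (x, True))"

datatype gen = GA | GB

definition metacyclic_rels :: "nat \<Rightarrow> nat \<Rightarrow> int \<Rightarrow> int \<Rightarrow> ((gen \<times> bool) list \<times> (gen \<times> bool) list) set" where
  "metacyclic_rels m s t r =
     {(wpow GA (int m), []),
      (wpow GB (int s), wpow GA t),
      ([(GB, True), (GA, False), (GB, False)], wpow GA r)}"

definition metacyclic :: "nat \<Rightarrow> nat \<Rightarrow> int \<Rightarrow> int \<Rightarrow> (gen \<times> bool) list set monoid" where
  "metacyclic m s t r = presented_group UNIV (metacyclic_rels m s t r)"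

definition mc_a :: "nat \<Rightarrow> nat \<Rightarrow> int \<Rightarrow> int \<Rightarrow> (gen \<times> bool) list set" where
  "mc_a m s t r = word_class (UNIV \<times> UNIV) (free_rels UNIV \<union> metacyclic_rels m s t r) [(GA, False)]"

definition mc_b :: "nat \<Rightarrow> nat \<Rightarrow> int \<Rightarrow> int \<Rightarrow> (gen \<times> bool) list set" where
  "mc_b m s t r = word_class (UNIV \<times> UNIV) (free_rels UNIV \<union> metacyclic_rels m s t r) [(GB, False)]"

definition conj_set :: "('a, 'b) monoid_scheme \<Rightarrow> 'a \<Rightarrow> 'a set \<Rightarrow> 'a set" where
  "conj_set G h H = (\<lambda>x. inv\<^bsub>G\<^esub> h \<otimes>\<^bsub>G\<^esub> x \<otimes>\<^bsub>G\<^esub> h) ` H"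

text \<open>Letters of the free product: pairs (factor, element of that factor).\<close>
definition as_letters :: "('a, 'b) monoid_scheme \<Rightarrow> 'a set set \<Rightarrow> ('a set \<times> 'a) set" where
  "as_letters G F = {(H, g). H \<in> F \<and> g \<in> H}"

text \<open>Relations: the monoid presentation of the free product of the members of F
  (multiplication inside each factor, identity of each factor = empty word), together
  with the active relators h^-1 g h (g^h)^-1 = 1 (h in F1, g in F2, g^h in h^-1 F2 h).\<close>
definition as_rels :: "('a, 'b) monoid_scheme \<Rightarrow> 'a set set \<Rightarrow> (('a set \<times> 'a) list \<times> ('a set \<times> 'a) list) set" where
  "as_rels G F =
     {([(H, g), (H, g')], [(H, g \<otimes>\<^bsub>G\<^esub> g')]) | H g g'. H \<in> F \<and> g \<in> H \<and> g' \<in> H}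
   \<union> {([(H, \<one>\<^bsub>G\<^esub>)], []) | H. H \<in> F}
   \<union> {([(H1, inv\<^bsub>G\<^esub> h), (H2, g), (H1, h),
        (conj_set G h H2, inv\<^bsub>G\<^esub> (inv\<^bsub>G\<^esub> h \<otimes>\<^bsub>G\<^esub> g \<otimes>\<^bsub>G\<^esub> h))], [])
       | H1 H2 h g. H1 \<in> F \<and> H2 \<in> F \<and> h \<in> H1 \<and> g \<in> H2}"

definition active_sum_group :: "('a, 'b) monoid_scheme \<Rightarrow> 'a set set \<Rightarrow> ('a set \<times> 'a) list set monoid" where
  "active_sum_group G F = word_monoid (as_letters G F) (as_rels G F)"

definition eval_word :: "('a, 'b) monoid_scheme \<Rightarrow> ('a set \<times> 'a) list \<Rightarrow> 'a" where
  "eval_word G w = foldr (\<lambda>(H, g) acc. g \<otimes>\<^bsub>G\<^esub> acc) w \<one>\<^bsub>G\<^esub>"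

definition active_sum_map :: "('a, 'b) monoid_scheme \<Rightarrow> 'a set set \<Rightarrow> ('a set \<times> 'a) list set \<Rightarrow> 'a" where
  "active_sum_map G F A = eval_word G (SOME w. w \<in> A)"

definition is_active_sum :: "('a, 'b) monoid_scheme \<Rightarrow> 'a set set \<Rightarrow> bool" where
  "is_active_sum G F \<longleftrightarrow>
     (\<forall>H\<in>F. subgroup H G) \<and>
     generate G (\<Union>F) = carrier G \<and>
     (\<forall>H\<in>F. \<forall>h\<in>carrier G. conj_set G h H \<in> F) \<and>
     active_sum_map G F \<in> iso (active_sum_group G F) G"

end

theory Submission
  imports Defs
begin

definition ev :: "('m, 'z) monoid_scheme \<Rightarrow> ('l \<Rightarrow> 'm) \<Rightarrow> 'l list \<Rightarrow> 'm" where
  "ev M f w = foldr (\<lambda>l acc. f l \<otimes>\<^bsub>M\<^esub> acc) w \<one>\<^bsub>M\<^esub>"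

lemma ev_Nil[simp]: "ev M f [] = \<one>\<^bsub>M\<^esub>" by (simp add: ev_def)
lemma ev_Cons[simp]: "ev M f (l # w) = f l \<otimes>\<^bsub>M\<^esub> ev M f w" by (simp add: ev_def)

lemma ev_closed:
  assumes "monoid M" "\<And>l. l \<in> set w \<Longrightarrow> f l \<in> carrier M"
  shows "ev M f w \<in> carrier M"
  using assms(2) by (induction w) (auto intro: monoid.m_closed[OF assms(1)] monoid.one_closed[OF assms(1)])

lemma ev_append:
  assumes "monoid M" "\<And>l. l \<in> set u \<Longrightarrow> f l \<in> carrier M" "\<And>l. l \<in> set v \<Longrightarrow> f l \<in> carrier M"
  shows "ev M f (u @ v) = ev M f u \<otimes>\<^bsub>M\<^esub> ev M f v"
  using assms(2)
proof (induction u)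
  case Nil
  have "ev M f v \<in> carrier M" using ev_closed[OF assms(1), of v f] assms(3) by blast
  then show ?case by (simp add: monoid.l_one[OF assms(1)])
next
  case (Cons a u)
  have "ev M f v \<in> carrier M" using ev_closed[OF assms(1), of v f] assms(3) by blast
  moreover have "ev M f u \<in> carrier M" using ev_closed[OF assms(1), of u f] Cons.prems by simp
  ultimately show ?case using Cons
    by (simp add: monoid.m_assoc[OF assms(1)])
qed

definition rels_in :: "'l set \<Rightarrow> ('l list \<times> 'l list) set \<Rightarrow> bool" where
  "rels_in Xl Rl \<longleftrightarrow> (\<forall>(u,v)\<in>Rl. set u \<subseteq> Xl \<and> set v \<subseteq> Xl)"

lemma word_cong_set:
  assumes "word_cong Rl u v" "rels_in Xl Rl"
  shows "set u \<subseteq> Xl \<longleftrightarrow> set v \<subseteq> Xl"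
  using assms by (induction rule: word_cong.induct) (auto simp: rels_in_def)

lemma word_cong_app:
  assumes "word_cong Rl u u'" "word_cong Rl v v'"
  shows "word_cong Rl (u @ v) (u' @ v')"
proof -
  have "word_cong Rl ([] @ u @ v) ([] @ u' @ v)" by (rule word_cong.ctxt[OF assms(1)])
  moreover have "word_cong Rl (u' @ v @ []) (u' @ v' @ [])" by (rule word_cong.ctxt[OF assms(2)])
  ultimately show ?thesis by (auto intro: word_cong.trans)
qed

lemma word_class_eq:
  assumes "set u \<subseteq> Xl" "set v \<subseteq> Xl"
  shows "word_class Xl Rl u = word_class Xl Rl v \<longleftrightarrow> word_cong Rl u v"
proof
  assume "word_class Xl Rl u = word_class Xl Rl v"
  moreover have "u \<in> word_class Xl Rl u" using assms by (simp add: word_class_def word_cong.refl)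
  ultimately show "word_cong Rl u v" by (simp add: word_class_def)
next
  assume "word_cong Rl u v"
  then show "word_class Xl Rl u = word_class Xl Rl v"
    by (auto simp: word_class_def intro: word_cong.trans word_cong.sym)
qed

lemma word_class_mem: "set u \<subseteq> Xl \<Longrightarrow> u \<in> word_class Xl Rl u"
  by (simp add: word_class_def word_cong.refl)

lemma wm_carrier: "carrier (word_monoid Xl Rl) = word_class Xl Rl ` {w. set w \<subseteq> Xl}"
  by (simp add: word_monoid_def)

lemma wm_one: "\<one>\<^bsub>word_monoid Xl Rl\<^esub> = word_class Xl Rl []"
  by (simp add: word_monoid_def)

lemma wm_mult:
  assumes "set u \<subseteq> Xl" "set v \<subseteq> Xl"
  shows "word_class Xl Rl u \<otimes>\<^bsub>word_monoid Xl Rl\<^esub> word_class Xl Rl v = word_class Xl Rl (u @ v)"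
proof -
  have "\<And>w. (\<exists>u'\<in>word_class Xl Rl u. \<exists>v'\<in>word_class Xl Rl v. word_cong Rl w (u' @ v'))
        \<longleftrightarrow> word_cong Rl w (u @ v)"
  proof
    fix w assume "\<exists>u'\<in>word_class Xl Rl u. \<exists>v'\<in>word_class Xl Rl v. word_cong Rl w (u' @ v')"
    then obtain u' v' where "word_cong Rl u' u" "word_cong Rl v' v" "word_cong Rl w (u' @ v')"
      by (auto simp: word_class_def)
    then show "word_cong Rl w (u @ v)" by (meson word_cong_app word_cong.trans)
  next
    fix w assume "word_cong Rl w (u @ v)"
    then show "\<exists>u'\<in>word_class Xl Rl u. \<exists>v'\<in>word_class Xl Rl v. word_cong Rl w (u' @ v')"
      using word_class_mem[OF assms(1)] word_class_mem[OF assms(2)] by blast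
  qed
  then show ?thesis by (simp add: word_monoid_def word_class_def)
qed

lemma wm_monoid: "monoid (word_monoid Xl Rl)"
proof (rule monoidI)
  fix x y assume "x \<in> carrier (word_monoid Xl Rl)" "y \<in> carrier (word_monoid Xl Rl)"
  then show "x \<otimes>\<^bsub>word_monoid Xl Rl\<^esub> y \<in> carrier (word_monoid Xl Rl)"
    by (auto simp: wm_carrier wm_mult)
next
  show "\<one>\<^bsub>word_monoid Xl Rl\<^esub> \<in> carrier (word_monoid Xl Rl)"
    by (auto simp: wm_carrier wm_one)
next
  fix x y z assume "x \<in> carrier (word_monoid Xl Rl)" "y \<in> carrier (word_monoid Xl Rl)"
    "z \<in> carrier (word_monoid Xl Rl)"
  then show "x \<otimes>\<^bsub>word_monoid Xl Rl\<^esub> y \<otimes>\<^bsub>word_monoid Xl Rl\<^esub> z =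
           x \<otimes>\<^bsub>word_monoid Xl Rl\<^esub> (y \<otimes>\<^bsub>word_monoid Xl Rl\<^esub> z)"
    by (auto simp: wm_carrier wm_mult)
next
  fix x assume "x \<in> carrier (word_monoid Xl Rl)"
  then show "\<one>\<^bsub>word_monoid Xl Rl\<^esub> \<otimes>\<^bsub>word_monoid Xl Rl\<^esub> x = x"
    by (auto simp: wm_carrier wm_mult wm_one)
next
  fix x assume "x \<in> carrier (word_monoid Xl Rl)"
  then show "x \<otimes>\<^bsub>word_monoid Xl Rl\<^esub> \<one>\<^bsub>word_monoid Xl Rl\<^esub> = x"
    by (auto simp: wm_carrier wm_mult wm_one)
qed

lemma wm_group:
  assumes "\<And>x. x \<in> Xl \<Longrightarrow> \<exists>y\<in>Xl. word_cong Rl [y, x] []"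
  shows "group (word_monoid Xl Rl)"
proof (rule monoid.group_l_invI[OF wm_monoid])
  fix XX assume "XX \<in> carrier (word_monoid Xl Rl)"
  then obtain w where w: "set w \<subseteq> Xl" "XX = word_class Xl Rl w" by (auto simp: wm_carrier)
  have "\<exists>w'. set w' \<subseteq> Xl \<and> word_cong Rl (w' @ w) []" using w(1)
  proof (induction w)
    case Nil show ?case by (rule exI[of _ "[]"]) (simp add: word_cong.refl)
  next
    case (Cons x w)
    then obtain w' where w': "set w' \<subseteq> Xl" "word_cong Rl (w' @ w) []" by auto
    obtain y where y: "y \<in> Xl" "word_cong Rl [y, x] []" using assms Cons.prems by auto
    have "word_cong Rl (w' @ [y, x] @ w) (w' @ [] @ w)" by (rule word_cong.ctxt[OF y(2)])
    then have "word_cong Rl ((w' @ [y]) @ x # w) []" using w'(2) by (auto intro: word_cong.trans)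
    then show ?case using w' y by (intro exI[of _ "w' @ [y]"]) auto
  qed
  then obtain w' where "set w' \<subseteq> Xl" "word_cong Rl (w' @ w) []" by auto
  then show "\<exists>YY\<in>carrier (word_monoid Xl Rl). YY \<otimes>\<^bsub>word_monoid Xl Rl\<^esub> XX = \<one>\<^bsub>word_monoid Xl Rl\<^esub>"
    using w by (auto simp: wm_carrier wm_mult wm_one word_class_eq intro!: bexI[of _ "word_class Xl Rl w'"])
qed

lemma ev_cong:
  assumes "word_cong Rl u v" "rels_in Xl Rl" "monoid M" "\<And>l. l \<in> Xl \<Longrightarrow> f l \<in> carrier M"
    and "\<And>u v. (u, v) \<in> Rl \<Longrightarrow> ev M f u = ev M f v"
  shows "set u \<subseteq> Xl \<Longrightarrow> ev M f u = ev M f v"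
  using assms(1)
proof (induction rule: word_cong.induct)
  case (base u v) then show ?case using assms(5) by auto
next
  case (refl u) then show ?case by simp
next
  case (sym u v) then show ?case using word_cong_set[OF sym.hyps(1) assms(2)] by simp
next
  case (trans u v w) then show ?case using word_cong_set[OF trans.hyps(1) assms(2)] by simp
next
  case (ctxt u v x y)
  have sv: "set v \<subseteq> Xl" using word_cong_set[OF ctxt.hyps(1) assms(2)] ctxt.prems by auto
  have "\<And>l. l \<in> set x \<Longrightarrow> f l \<in> carrier M" "\<And>l. l \<in> set y \<Longrightarrow> f l \<in> carrier M"
       "\<And>l. l \<in> set u \<Longrightarrow> f l \<in> carrier M" "\<And>l. l \<in> set v \<Longrightarrow> f l \<in> carrier M"
    using ctxt.prems sv assms(4) by auto
  note fc = this
  have a1: "ev M f (x @ u @ y) = ev M f x \<otimes>\<^bsub>M\<^esub> (ev M f u \<otimes>\<^bsub>M\<^esub> ev M f y)"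
    using ev_append[OF assms(3), of x f "u @ y"] ev_append[OF assms(3), of u f y] fc by auto
  have a2: "ev M f (x @ v @ y) = ev M f x \<otimes>\<^bsub>M\<^esub> (ev M f v \<otimes>\<^bsub>M\<^esub> ev M f y)"
    using ev_append[OF assms(3), of x f "v @ y"] ev_append[OF assms(3), of v f y] fc by auto
  show ?case using ctxt a1 a2 by simp
qed

definition induced :: "('m, 'z) monoid_scheme \<Rightarrow> ('l \<Rightarrow> 'm) \<Rightarrow> 'l list set \<Rightarrow> 'm" where
  "induced M f A = ev M f (SOME w. w \<in> A)"

lemma induced_class:
  assumes "set w \<subseteq> Xl" "rels_in Xl Rl" "monoid M" "\<And>l. l \<in> Xl \<Longrightarrow> f l \<in> carrier M"
    and "\<And>u v. (u, v) \<in> Rl \<Longrightarrow> ev M f u = ev M f v"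
  shows "induced M f (word_class Xl Rl w) = ev M f w"
proof -
  have "(SOME v. v \<in> word_class Xl Rl w) \<in> word_class Xl Rl w"
    using word_class_mem[OF assms(1)] by (rule someI)
  then obtain v where v: "v = (SOME v. v \<in> word_class Xl Rl w)" "set v \<subseteq> Xl" "word_cong Rl v w"
    by (auto simp: word_class_def)
  show ?thesis unfolding induced_def v(1)[symmetric]
    by (rule ev_cong[OF v(3) assms(2-5) v(2)])
qed

lemma induced_hom:
  assumes "rels_in Xl Rl" "monoid M" "\<And>l. l \<in> Xl \<Longrightarrow> f l \<in> carrier M"
    and "\<And>u v. (u, v) \<in> Rl \<Longrightarrow> ev M f u = ev M f v"
  shows "induced M f \<in> hom (word_monoid Xl Rl) M"
proof (rule homI)
  fix XX assume "XX \<in> carrier (word_monoid Xl Rl)"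
  then obtain w where "set w \<subseteq> Xl" "XX = word_class Xl Rl w" by (auto simp: wm_carrier)
  then show "induced M f XX \<in> carrier M"
    using induced_class[OF _ assms] assms(3) by (auto intro!: ev_closed[OF assms(2)])
next
  fix XX YY assume "XX \<in> carrier (word_monoid Xl Rl)" "YY \<in> carrier (word_monoid Xl Rl)"
  then obtain u v where "set u \<subseteq> Xl" "XX = word_class Xl Rl u" "set v \<subseteq> Xl" "YY = word_class Xl Rl v"
    by (auto simp: wm_carrier)
  then show "induced M f (XX \<otimes>\<^bsub>word_monoid Xl Rl\<^esub> YY) = induced M f XX \<otimes>\<^bsub>M\<^esub> induced M f YY"
    using assms(3) by (simp add: wm_mult induced_class[OF _ assms] ev_append[OF assms(2)] subset_iff)
qed


context group
begin

lemma cancel1[simp]: "x \<in> carrier G \<Longrightarrow> z \<in> carrier G \<Longrightarrow> x \<otimes> (inv x \<otimes> z) = z"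
  by (simp add: m_assoc[symmetric])
lemma cancel2[simp]: "x \<in> carrier G \<Longrightarrow> z \<in> carrier G \<Longrightarrow> inv x \<otimes> (x \<otimes> z) = z"
  by (simp add: m_assoc[symmetric])

lemma conj_hom: "h \<in> carrier G \<Longrightarrow> (\<lambda>x. inv h \<otimes> x \<otimes> h) \<in> hom G G"
  by (rule homI) (auto simp: m_assoc)

lemma conj_int_pow:
  "h \<in> carrier G \<Longrightarrow> x \<in> carrier G \<Longrightarrow> inv h \<otimes> x [^] (k::int) \<otimes> h = (inv h \<otimes> x \<otimes> h) [^] k"
  using hom_int_pow[OF conj_hom, of h x k] is_group by simp

lemma conj_set_one: "K \<subseteq> carrier G \<Longrightarrow> conj_set G \<one> K = K"
proof -
  assume K: "K \<subseteq> carrier G"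
  have "(\<lambda>x. inv \<one> \<otimes> x \<otimes> \<one>) ` K = (\<lambda>x. x) ` K" by (rule image_cong) (use K in auto)
  then show ?thesis by (simp add: conj_set_def)
qed

lemma conj_set_sub: "K \<subseteq> carrier G \<Longrightarrow> h \<in> carrier G \<Longrightarrow> conj_set G h K \<subseteq> carrier G"
  by (auto simp: conj_set_def)

lemma conj_set_mult:
  assumes "K \<subseteq> carrier G" "h1 \<in> carrier G" "h2 \<in> carrier G"
  shows "conj_set G (h1 \<otimes> h2) K = conj_set G h2 (conj_set G h1 K)"
proof -
  have "\<And>x. x \<in> K \<Longrightarrow> inv (h1 \<otimes> h2) \<otimes> x \<otimes> (h1 \<otimes> h2) = inv h2 \<otimes> (inv h1 \<otimes> x \<otimes> h1) \<otimes> h2"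
    using assms by (auto simp: inv_mult_group m_assoc)
  then show ?thesis by (auto simp: conj_set_def image_image)
qed

lemma conj_mult_eq:
  assumes "x \<in> carrier G" "h1 \<in> carrier G" "h2 \<in> carrier G"
  shows "inv (h1 \<otimes> h2) \<otimes> x \<otimes> (h1 \<otimes> h2) = inv h2 \<otimes> (inv h1 \<otimes> x \<otimes> h1) \<otimes> h2"
  using assms by (auto simp: inv_mult_group m_assoc)

lemma subgroup_conj:
  assumes "subgroup K G" "h \<in> carrier G"
  shows "subgroup (conj_set G h K) G"
proof -
  have Kc: "K \<subseteq> carrier G" using subgroup.subset[OF assms(1)] .
  show ?thesis
  proof (rule subgroupI)
    show "conj_set G h K \<subseteq> carrier G" using conj_set_sub[OF Kc assms(2)] .
    show "conj_set G h K \<noteq> {}" using subgroup.one_closed[OF assms(1)] by (auto simp: conj_set_def)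
  next
    fix y assume "y \<in> conj_set G h K"
    then obtain x where x: "x \<in> K" "y = inv h \<otimes> x \<otimes> h" by (auto simp: conj_set_def)
    have "inv y = inv h \<otimes> inv x \<otimes> h" using x Kc assms(2) by (auto simp: inv_mult_group m_assoc)
    then show "inv y \<in> conj_set G h K"
      using subgroup.m_inv_closed[OF assms(1) x(1)] by (auto simp: conj_set_def)
  next
    fix y z assume "y \<in> conj_set G h K" "z \<in> conj_set G h K"
    then obtain x x' where x: "x \<in> K" "y = inv h \<otimes> x \<otimes> h" "x' \<in> K" "z = inv h \<otimes> x' \<otimes> h"
      by (auto simp: conj_set_def)
    have "x \<in> carrier G" "x' \<in> carrier G" using x Kc by auto
    then have "y \<otimes> z = inv h \<otimes> (x \<otimes> x') \<otimes> h" using x assms(2) by (auto simp: m_assoc)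
    then show "y \<otimes> z \<in> conj_set G h K"
      using subgroup.m_closed[OF assms(1) x(1) x(3)] by (auto simp: conj_set_def)
  qed
qed

lemma conj_generate:
  assumes "g \<in> carrier G" "h \<in> carrier G"
    and "inv h \<otimes> g \<otimes> h \<in> generate G {g}" "h \<otimes> g \<otimes> inv h \<in> generate G {g}"
  shows "conj_set G h (generate G {g}) = generate G {g}"
proof -
  have sg: "subgroup (generate G {g}) G" using generate_is_subgroup assms(1) by auto
  show ?thesis
  proof
    show "conj_set G h (generate G {g}) \<subseteq> generate G {g}"
    proof
      fix y assume "y \<in> conj_set G h (generate G {g})"
      then obtain k where "y = inv h \<otimes> g [^] (k::int) \<otimes> h"
        by (auto simp: conj_set_def generate_pow[OF assms(1)])
      then have "y = (inv h \<otimes> g \<otimes> h) [^] k" using conj_int_pow assms by simp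
      then show "y \<in> generate G {g}" using subgroup_int_pow_closed[OF sg assms(3)] by simp
    qed
  next
    show "generate G {g} \<subseteq> conj_set G h (generate G {g})"
    proof
      fix y assume "y \<in> generate G {g}"
      then obtain k where y: "y = g [^] (k::int)" by (auto simp: generate_pow[OF assms(1)])
      have "h \<otimes> g [^] k \<otimes> inv h = (h \<otimes> g \<otimes> inv h) [^] k"
        using conj_int_pow[of "inv h" g k] assms by simp
      then have z: "h \<otimes> y \<otimes> inv h \<in> generate G {g}"
        using subgroup_int_pow_closed[OF sg assms(4)] y by simp
      have "y = inv h \<otimes> (h \<otimes> y \<otimes> inv h) \<otimes> h" using y assms by (simp add: m_assoc)
      then show "y \<in> conj_set G h (generate G {g})" using z by (auto simp: conj_set_def)
    qed
  qed
qed

end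


locale mc =
  fixes m s :: nat and t r :: int
  assumes m_pos: "0 < m" and s_pos: "0 < s"
    and rs: "r ^ s mod int m = 1 mod int m"
    and mdvd: "int m dvd t * (r - 1)"
    and gdvd: "gcd (int m) (r - 1) dvd t"
begin

abbreviation "RG \<equiv> free_rels UNIV \<union> metacyclic_rels m s t r"
abbreviation "XG \<equiv> (UNIV :: (gen \<times> bool) set)"
abbreviation "cl \<equiv> word_class XG RG"
abbreviation "G \<equiv> metacyclic m s t r"
abbreviation "a \<equiv> mc_a m s t r"
abbreviation "b \<equiv> mc_b m s t r"

lemma G_def': "G = word_monoid XG RG"
  by (simp add: metacyclic_def presented_group_def)

lemma a_def': "a = cl [(GA, False)]" by (simp add: mc_a_def)
lemma b_def': "b = cl [(GB, False)]" by (simp add: mc_b_def)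

lemma RG_in: "rels_in XG RG" by (simp add: rels_in_def)

lemma G_group: "group G"
  unfolding G_def'
proof (rule wm_group)
  fix x :: "gen \<times> bool"
  obtain g e where x: "x = (g, e)" by force
  have "([(g, \<not> e), (g, \<not> \<not> e)], []) \<in> free_rels UNIV" unfolding free_rels_def by blast
  then have "word_cong RG [(g, \<not> e), x] []" using x by (auto intro: word_cong.base)
  then show "\<exists>y\<in>XG. word_cong RG [y, x] []" by blast
qed

sublocale G: group G by (rule G_group)

lemma G_carrier: "carrier G = range cl"
  by (simp add: G_def' wm_carrier)

lemma cl_closed[simp]: "cl w \<in> carrier G"
  by (simp add: G_carrier)

lemma cl_mult: "cl u \<otimes>\<^bsub>G\<^esub> cl v = cl (u @ v)"
  by (simp add: G_def' wm_mult)

lemma cl_one: "\<one>\<^bsub>G\<^esub> = cl []"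
  by (simp add: G_def' wm_one)

lemma cl_eq: "cl u = cl v \<longleftrightarrow> word_cong RG u v"
  by (simp add: word_class_eq)

lemma cl_Cons: "cl (l # w) = cl [l] \<otimes>\<^bsub>G\<^esub> cl w"
  by (simp add: cl_mult)

lemma cl_inv: "cl [(x, True)] = inv\<^bsub>G\<^esub> (cl [(x, False)])"
proof -
  have "([(x, True), (x, \<not> True)], []) \<in> free_rels UNIV" unfolding free_rels_def by blast
  then have "cl [(x, True)] \<otimes>\<^bsub>G\<^esub> cl [(x, False)] = \<one>\<^bsub>G\<^esub>"
    by (simp add: cl_mult cl_one cl_eq word_cong.base)
  then show ?thesis by (intro G.inv_equality[symmetric]) auto
qed

lemma cl_replicate: "cl (replicate n l) = cl [l] [^]\<^bsub>G\<^esub> n"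
proof (induction n)
  case 0 then show ?case by (simp add: cl_one)
next
  case (Suc n)
  have e1: "cl (replicate (Suc n) l) = cl [l] \<otimes>\<^bsub>G\<^esub> cl (replicate n l)"
    using cl_Cons[of l "replicate n l"] by simp
  have e2: "cl [l] \<otimes>\<^bsub>G\<^esub> cl (replicate n l) = cl [l] [^]\<^bsub>G\<^esub> Suc n"
    using Suc G.nat_pow_Suc2[of "cl [l]" n] by simp
  show ?case by (rule HOL.trans[OF e1 e2])
qed

lemma cl_wpow: "cl (wpow x k) = cl [(x, False)] [^]\<^bsub>G\<^esub> k"
proof (cases "0 \<le> k")
  case True
  have e1: "cl (wpow x k) = cl (replicate (nat k) (x, False))" using True by (simp add: wpow_def)
  have e2: "cl (replicate (nat k) (x, False)) = cl [(x, False)] [^]\<^bsub>G\<^esub> nat k" by (rule cl_replicate)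
  have e3: "cl [(x, False)] [^]\<^bsub>G\<^esub> nat k = cl [(x, False)] [^]\<^bsub>G\<^esub> k"
    using True int_pow_int[of G "cl [(x,False)]" "nat k"] by simp
  show ?thesis using e1 e2 e3 by simp
next
  case False
  have e1: "cl (wpow x k) = cl (replicate (nat (- k)) (x, True))" using False by (simp add: wpow_def)
  have e2: "cl (replicate (nat (- k)) (x, True)) = cl [(x, True)] [^]\<^bsub>G\<^esub> nat (- k)"
    by (rule cl_replicate)
  have e3: "cl [(x, True)] [^]\<^bsub>G\<^esub> nat (- k) = inv\<^bsub>G\<^esub> (cl [(x, False)] [^]\<^bsub>G\<^esub> nat (- k))"
    unfolding cl_inv by (rule G.nat_pow_inv) simp
  have e4: "inv\<^bsub>G\<^esub> (cl [(x, False)] [^]\<^bsub>G\<^esub> nat (- k)) = cl [(x, False)] [^]\<^bsub>G\<^esub> k"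
    using False G.int_pow_neg_int[of "cl [(x,False)]" "nat (- k)"] by simp
  show ?thesis using e1 e2 e3 e4 by simp
qed

lemma a_closed[simp]: "a \<in> carrier G" and b_closed[simp]: "b \<in> carrier G"
  by (simp_all add: a_def' b_def')

lemma rel1: "a [^]\<^bsub>G\<^esub> (int m) = \<one>\<^bsub>G\<^esub>"
proof -
  have "(wpow GA (int m), []) \<in> RG" by (simp add: metacyclic_rels_def)
  then show ?thesis by (simp add: a_def' cl_wpow[symmetric] cl_one cl_eq word_cong.base)
qed

lemma rel2: "b [^]\<^bsub>G\<^esub> (int s) = a [^]\<^bsub>G\<^esub> t"
proof -
  have "(wpow GB (int s), wpow GA t) \<in> RG" by (simp add: metacyclic_rels_def)
  then show ?thesis by (simp add: a_def' b_def' cl_wpow[symmetric] cl_eq word_cong.base)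
qed

lemma rel3: "inv\<^bsub>G\<^esub> b \<otimes>\<^bsub>G\<^esub> a \<otimes>\<^bsub>G\<^esub> b = a [^]\<^bsub>G\<^esub> r"
proof -
  have "([(GB, True), (GA, False), (GB, False)], wpow GA r) \<in> RG" by (simp add: metacyclic_rels_def)
  then have "cl [(GB, True), (GA, False), (GB, False)] = cl (wpow GA r)"
    by (simp add: cl_eq word_cong.base)
  then show ?thesis by (simp add: a_def' b_def' cl_wpow cl_inv[symmetric] cl_mult)
qed

lemma carrier_gen: "carrier G \<subseteq> generate G {a, b}"
proof
  fix x assume "x \<in> carrier G"
  then obtain w where x: "x = cl w" by (auto simp: G_carrier)
  have "cl w \<in> generate G {a, b}"
  proof (induction w)
    case Nil then show ?case by (simp add: cl_one[symmetric] generate.one)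
  next
    case (Cons l w)
    obtain g e where l: "l = (g, e)" by force
    have "cl [l] \<in> generate G {a, b}"
      using l by (cases g; cases e) (auto simp: a_def' b_def' cl_inv intro: generate.incl generate.inv)
    then show ?case using Cons by (simp add: cl_Cons[of l w] generate.eng)
  qed
  then show "x \<in> generate G {a, b}" using x by simp
qed

lemma a_pow_m_mult: "a [^]\<^bsub>G\<^esub> (int m * j) = \<one>\<^bsub>G\<^esub>"
  by (simp add: G.int_pow_pow[symmetric] rel1)

lemma conj_b_a_pow: "inv\<^bsub>G\<^esub> b \<otimes>\<^bsub>G\<^esub> a [^]\<^bsub>G\<^esub> (k::int) \<otimes>\<^bsub>G\<^esub> b = a [^]\<^bsub>G\<^esub> (r * k)"
  by (simp add: G.conj_int_pow rel3 G.int_pow_pow)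

lemma conj_bn_a: "inv\<^bsub>G\<^esub> (b [^]\<^bsub>G\<^esub> (n::nat)) \<otimes>\<^bsub>G\<^esub> a \<otimes>\<^bsub>G\<^esub> b [^]\<^bsub>G\<^esub> n = a [^]\<^bsub>G\<^esub> (r ^ n)"
proof (induction n)
  case 0 then show ?case by simp
next
  case (Suc n)
  have "inv\<^bsub>G\<^esub> (b [^]\<^bsub>G\<^esub> Suc n) \<otimes>\<^bsub>G\<^esub> a \<otimes>\<^bsub>G\<^esub> b [^]\<^bsub>G\<^esub> Suc n
      = inv\<^bsub>G\<^esub> b \<otimes>\<^bsub>G\<^esub> (inv\<^bsub>G\<^esub> (b [^]\<^bsub>G\<^esub> n) \<otimes>\<^bsub>G\<^esub> a \<otimes>\<^bsub>G\<^esub> b [^]\<^bsub>G\<^esub> n) \<otimes>\<^bsub>G\<^esub> b"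
    by (simp add: G.inv_mult_group G.m_assoc)
  then show ?case by (simp add: Suc conj_b_a_pow)
qed

end


context mc
begin

abbreviation "A \<equiv> generate G {a}"
abbreviation "B \<equiv> generate G {b}"
abbreviation "z \<equiv> b [^]\<^bsub>G\<^esub> (int s)"

lemma A_sub: "subgroup A G" and B_sub: "subgroup B G"
  by (auto intro: G.generate_is_subgroup)

lemma A_pow: "A = {a [^]\<^bsub>G\<^esub> (k::int) | k. k \<in> UNIV}" and B_pow: "B = {b [^]\<^bsub>G\<^esub> (k::int) | k. k \<in> UNIV}"
  by (auto simp: G.generate_pow)

lemma a_in_A: "a \<in> A" and b_in_B: "b \<in> B"
  by (auto intro: generate.incl)

lemma apow_in_A: "a [^]\<^bsub>G\<^esub> (k::int) \<in> A" and bpow_in_B: "b [^]\<^bsub>G\<^esub> (k::int) \<in> B"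
  using A_pow B_pow by auto

lemma z_eq: "z = a [^]\<^bsub>G\<^esub> t" by (rule rel2)

lemma z_comm_a: "z \<otimes>\<^bsub>G\<^esub> a = a \<otimes>\<^bsub>G\<^esub> z"
proof -
  have "a [^]\<^bsub>G\<^esub> t \<otimes>\<^bsub>G\<^esub> a = a [^]\<^bsub>G\<^esub> (t + 1)" using G.int_pow_mult[of a t 1] by simp
  moreover have "a \<otimes>\<^bsub>G\<^esub> a [^]\<^bsub>G\<^esub> t = a [^]\<^bsub>G\<^esub> (1 + t)" using G.int_pow_mult[of a 1 t] by simp
  ultimately show ?thesis by (simp add: z_eq add.commute)
qed

lemma b_a_binv: "b \<otimes>\<^bsub>G\<^esub> a \<otimes>\<^bsub>G\<^esub> inv\<^bsub>G\<^esub> b \<in> A"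
proof -
  obtain n where sn: "s = Suc n" using s_pos by (cases s) auto
  define w where "w = b [^]\<^bsub>G\<^esub> n"
  define zz where "zz = z"
  have wc: "w \<in> carrier G" by (simp add: w_def)
  have zc: "zz \<in> carrier G" by (simp add: zz_def)
  have za: "zz \<otimes>\<^bsub>G\<^esub> a = a \<otimes>\<^bsub>G\<^esub> zz" unfolding zz_def by (rule z_comm_a)
  have "z = b [^]\<^bsub>G\<^esub> (Suc n)" by (simp only: sn int_pow_int)
  then have "zz = w \<otimes>\<^bsub>G\<^esub> b" by (simp add: w_def zz_def)
  then have hb: "b = inv\<^bsub>G\<^esub> w \<otimes>\<^bsub>G\<^esub> zz" using wc zc by (simp add: G.inv_solve_left)
  have e1: "b \<otimes>\<^bsub>G\<^esub> a \<otimes>\<^bsub>G\<^esub> inv\<^bsub>G\<^esub> b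
      = inv\<^bsub>G\<^esub> w \<otimes>\<^bsub>G\<^esub> (zz \<otimes>\<^bsub>G\<^esub> a \<otimes>\<^bsub>G\<^esub> inv\<^bsub>G\<^esub> zz) \<otimes>\<^bsub>G\<^esub> w"
    using wc zc unfolding hb by (simp add: G.inv_mult_group G.m_assoc)
  have e2: "zz \<otimes>\<^bsub>G\<^esub> a \<otimes>\<^bsub>G\<^esub> inv\<^bsub>G\<^esub> zz = a"
  proof -
    have "zz \<otimes>\<^bsub>G\<^esub> a \<otimes>\<^bsub>G\<^esub> inv\<^bsub>G\<^esub> zz = a \<otimes>\<^bsub>G\<^esub> zz \<otimes>\<^bsub>G\<^esub> inv\<^bsub>G\<^esub> zz" by (simp only: za)
    then show ?thesis using zc by (simp add: G.m_assoc)
  qed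
  have "b \<otimes>\<^bsub>G\<^esub> a \<otimes>\<^bsub>G\<^esub> inv\<^bsub>G\<^esub> b = a [^]\<^bsub>G\<^esub> (r ^ n)"
    using e1 e2 conj_bn_a[of n] by (simp add: w_def)
  then show ?thesis by (simp add: apow_in_A)
qed

lemma conj_bA: "conj_set G b A = A"
proof (rule G.conj_generate)
  show "inv\<^bsub>G\<^esub> b \<otimes>\<^bsub>G\<^esub> a \<otimes>\<^bsub>G\<^esub> b \<in> A" using rel3 apow_in_A by simp
  show "b \<otimes>\<^bsub>G\<^esub> a \<otimes>\<^bsub>G\<^esub> inv\<^bsub>G\<^esub> b \<in> A" by (rule b_a_binv)
qed auto

lemma bezout: "\<exists>\<alpha> \<beta>. t = \<alpha> * int m + \<beta> * (r - 1)"
proof -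
  obtain c where c: "t = gcd (int m) (r - 1) * c" using gdvd by (auto elim: dvdE)
  obtain u v where uv: "u * int m + v * (r - 1) = gcd (int m) (r - 1)" using bezout_int by blast
  have "t = (c * u) * int m + (c * v) * (r - 1)" using c uv[symmetric] by (simp add: algebra_simps)
  then show ?thesis by blast
qed

definition "bet = (SOME \<beta>. \<exists>\<alpha>. t = \<alpha> * int m + \<beta> * (r - 1))"
definition "c = a [^]\<^bsub>G\<^esub> bet"

lemma bet_prop: "\<exists>\<alpha>. t = \<alpha> * int m + bet * (r - 1)"
proof -
  have "\<exists>\<beta> \<alpha>. t = \<alpha> * int m + \<beta> * (r - 1)" using bezout by blast
  then show ?thesis unfolding bet_def by (rule someI_ex)
qed

lemma a_pow_m: "a [^]\<^bsub>G\<^esub> (\<alpha> * int m + k) = a [^]\<^bsub>G\<^esub> k"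
proof -
  have "a [^]\<^bsub>G\<^esub> (\<alpha> * int m + k) = a [^]\<^bsub>G\<^esub> (int m * \<alpha>) \<otimes>\<^bsub>G\<^esub> a [^]\<^bsub>G\<^esub> k"
    by (simp add: G.int_pow_mult[symmetric] mult.commute)
  then show ?thesis by (simp add: a_pow_m_mult)
qed

lemma a_t_eq: "a [^]\<^bsub>G\<^esub> t = a [^]\<^bsub>G\<^esub> (bet * (r - 1))"
proof -
  obtain \<alpha> where al: "t = \<alpha> * int m + bet * (r - 1)" using bet_prop by blast
  have "a [^]\<^bsub>G\<^esub> t = a [^]\<^bsub>G\<^esub> (\<alpha> * int m + bet * (r - 1))" using al by (rule arg_cong)
  then show ?thesis by (simp only: a_pow_m)
qed

lemma c_closed[simp]: "c \<in> carrier G" by (simp add: c_def)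

lemma d_eq: "inv\<^bsub>G\<^esub> b \<otimes>\<^bsub>G\<^esub> c \<otimes>\<^bsub>G\<^esub> b = a [^]\<^bsub>G\<^esub> (r * bet)"
  by (simp add: c_def conj_b_a_pow)

lemma inv_c: "inv\<^bsub>G\<^esub> c = a [^]\<^bsub>G\<^esub> (- bet)"
  by (simp add: c_def G.int_pow_neg)

lemma G1: "inv\<^bsub>G\<^esub> c \<otimes>\<^bsub>G\<^esub> (inv\<^bsub>G\<^esub> b \<otimes>\<^bsub>G\<^esub> c \<otimes>\<^bsub>G\<^esub> b) = z"
proof -
  have e1: "a [^]\<^bsub>G\<^esub> (- bet) \<otimes>\<^bsub>G\<^esub> a [^]\<^bsub>G\<^esub> (r * bet) = a [^]\<^bsub>G\<^esub> (- bet + r * bet)"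
    by (rule G.int_pow_mult[symmetric]) simp
  have e2: "- bet + r * bet = bet * (r - 1)" by (simp add: algebra_simps)
  show ?thesis unfolding d_eq inv_c e1 e2 z_eq a_t_eq ..
qed

lemma G1': "inv\<^bsub>G\<^esub> b \<otimes>\<^bsub>G\<^esub> c \<otimes>\<^bsub>G\<^esub> b \<otimes>\<^bsub>G\<^esub> inv\<^bsub>G\<^esub> c = z"
proof -
  have e1: "a [^]\<^bsub>G\<^esub> (r * bet) \<otimes>\<^bsub>G\<^esub> a [^]\<^bsub>G\<^esub> (- bet) = a [^]\<^bsub>G\<^esub> (r * bet + - bet)"
    by (rule G.int_pow_mult[symmetric]) simp
  have e2: "r * bet + - bet = bet * (r - 1)" by (simp add: algebra_simps)
  show ?thesis unfolding d_eq inv_c e1 e2 z_eq a_t_eq ..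
qed

lemma z_in_B: "z \<in> B" by (rule bpow_in_B)

lemma conj_cB: "conj_set G c B = B"
proof (rule G.conj_generate)
  have e: "inv\<^bsub>G\<^esub> c \<otimes>\<^bsub>G\<^esub> b \<otimes>\<^bsub>G\<^esub> c = b \<otimes>\<^bsub>G\<^esub> inv\<^bsub>G\<^esub> (inv\<^bsub>G\<^esub> c \<otimes>\<^bsub>G\<^esub> (inv\<^bsub>G\<^esub> b \<otimes>\<^bsub>G\<^esub> c \<otimes>\<^bsub>G\<^esub> b))"
    by (simp add: G.inv_mult_group G.m_assoc)
  show "inv\<^bsub>G\<^esub> c \<otimes>\<^bsub>G\<^esub> b \<otimes>\<^bsub>G\<^esub> c \<in> B"
    unfolding e G1 using b_in_B z_in_B B_sub by (auto intro: subgroup.m_closed subgroup.m_inv_closed)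
  have e': "c \<otimes>\<^bsub>G\<^esub> b \<otimes>\<^bsub>G\<^esub> inv\<^bsub>G\<^esub> c = b \<otimes>\<^bsub>G\<^esub> (inv\<^bsub>G\<^esub> b \<otimes>\<^bsub>G\<^esub> c \<otimes>\<^bsub>G\<^esub> b \<otimes>\<^bsub>G\<^esub> inv\<^bsub>G\<^esub> c)"
    by (simp add: G.m_assoc)
  show "c \<otimes>\<^bsub>G\<^esub> b \<otimes>\<^bsub>G\<^esub> inv\<^bsub>G\<^esub> c \<in> B"
    unfolding e' G1' using b_in_B z_in_B B_sub by (auto intro: subgroup.m_closed)
qed auto

definition "yy = inv\<^bsub>G\<^esub> c \<otimes>\<^bsub>G\<^esub> inv\<^bsub>G\<^esub> b \<otimes>\<^bsub>G\<^esub> c"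

lemma yy_b: "yy \<otimes>\<^bsub>G\<^esub> b = z"
  using G1 by (simp add: yy_def G.m_assoc)

lemma yy_in_B: "yy \<in> B"
proof -
  have "yy = z \<otimes>\<^bsub>G\<^esub> inv\<^bsub>G\<^esub> b" using yy_b by (simp add: yy_def G.inv_solve_right)
  then show ?thesis using b_in_B z_in_B B_sub by (auto intro: subgroup.m_closed subgroup.m_inv_closed)
qed

end


context mc
begin

definition "F = {conj_set G g A | g. g \<in> carrier G} \<union> {conj_set G g B | g. g \<in> carrier G}"

lemma F_mem: "H \<in> F \<longleftrightarrow> (\<exists>g\<in>carrier G. H = conj_set G g A) \<or> (\<exists>g\<in>carrier G. H = conj_set G g B)"
  unfolding F_def by blast

lemma A_c: "A \<subseteq> carrier G" and B_c: "B \<subseteq> carrier G"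
  using A_sub B_sub subgroup.subset by blast+

lemma F_cases:
  assumes "H \<in> F"
  obtains g XX where "g \<in> carrier G" "XX = A \<or> XX = B" "H = conj_set G g XX"
  using assms unfolding F_mem by blast

lemma F_sub: "H \<in> F \<Longrightarrow> subgroup H G"
proof -
  assume "H \<in> F"
  then obtain g XX where gX: "g \<in> carrier G" "XX = A \<or> XX = B" "H = conj_set G g XX"
    by (rule F_cases)
  then have "subgroup XX G" using A_sub B_sub by blast
  then show ?thesis using gX G.subgroup_conj by simp
qed

lemma F_c: "H \<in> F \<Longrightarrow> H \<subseteq> carrier G"
  using F_sub subgroup.subset by blast

lemma conjA_in_F: "g \<in> carrier G \<Longrightarrow> conj_set G g A \<in> F"
  unfolding F_mem by blast

lemma conjB_in_F: "g \<in> carrier G \<Longrightarrow> conj_set G g B \<in> F"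
  unfolding F_mem by blast

lemma F_conj:
  assumes "H \<in> F" "h \<in> carrier G" shows "conj_set G h H \<in> F"
proof -
  from assms(1) obtain g XX where gX: "g \<in> carrier G" "XX = A \<or> XX = B" "H = conj_set G g XX"
    by (rule F_cases)
  have XXc: "XX \<subseteq> carrier G" using gX(2) A_c B_c by blast
  have e: "conj_set G h H = conj_set G (g \<otimes>\<^bsub>G\<^esub> h) XX"
    using gX(3) G.conj_set_mult[OF XXc gX(1) assms(2)] by simp
  have gh: "g \<otimes>\<^bsub>G\<^esub> h \<in> carrier G" using gX(1) assms(2) by simp
  show ?thesis using gX(2)
  proof
    assume "XX = A" then show ?thesis using e conjA_in_F[OF gh] by simp
  next
    assume "XX = B" then show ?thesis using e conjB_in_F[OF gh] by simp
  qed
qed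

lemma A_in_F: "A \<in> F"
  using conjA_in_F[OF G.one_closed] unfolding G.conj_set_one[OF A_c] .

lemma B_in_F: "B \<in> F"
  using conjB_in_F[OF G.one_closed] unfolding G.conj_set_one[OF B_c] .

lemma UF_c: "\<Union>F \<subseteq> carrier G"
  by (rule Union_least) (rule F_c)

lemma F_generate: "generate G (\<Union>F) = carrier G"
proof
  show "generate G (\<Union>F) \<subseteq> carrier G" by (rule G.generate_incl[OF UF_c])
  have "a \<in> \<Union>F" by (rule UnionI[OF A_in_F a_in_A])
  moreover have "b \<in> \<Union>F" by (rule UnionI[OF B_in_F b_in_B])
  ultimately have "{a, b} \<subseteq> \<Union>F" by (rule insert_subsetI[OF _ insert_subsetI[OF _ empty_subsetI]])
  then have "generate G {a, b} \<subseteq> generate G (\<Union>F)" by (rule G.mono_generate)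
  then show "carrier G \<subseteq> generate G (\<Union>F)" by (rule subset_trans[OF carrier_gen])
qed

end


context mc
begin

abbreviation "L \<equiv> as_letters G F"
abbreviation "RS \<equiv> as_rels G F"
abbreviation "S \<equiv> active_sum_group G F"
abbreviation "clS \<equiv> word_class L RS"
abbreviation "\<iota> H g \<equiv> clS [(H, g)]"

lemma S_def': "S = word_monoid L RS" by (simp add: active_sum_group_def)

lemma L_mem: "(H, g) \<in> L \<longleftrightarrow> H \<in> F \<and> g \<in> H" by (simp add: as_letters_def)

lemma rel_prod_in:
  assumes "H \<in> F" "g \<in> H" "g' \<in> H"
  shows "set [(H, g), (H, g')] \<subseteq> L \<and> set [(H, g \<otimes>\<^bsub>G\<^esub> g')] \<subseteq> L"
proof -
  have "g \<otimes>\<^bsub>G\<^esub> g' \<in> H" using subgroup.m_closed[OF F_sub[OF assms(1)] assms(2,3)] .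
  then show ?thesis using assms by (simp add: L_mem)
qed

lemma rel_one_in:
  assumes "H \<in> F"
  shows "set [(H, \<one>\<^bsub>G\<^esub>)] \<subseteq> L"
proof -
  have "\<one>\<^bsub>G\<^esub> \<in> H" using subgroup.one_closed[OF F_sub[OF assms(1)]] .
  then show ?thesis using assms by (simp add: L_mem)
qed

lemma rel_act_in:
  assumes H: "H1 \<in> F" "H2 \<in> F" "h \<in> H1" "g \<in> H2"
  shows "set [(H1, inv\<^bsub>G\<^esub> h), (H2, g), (H1, h),
        (conj_set G h H2, inv\<^bsub>G\<^esub> (inv\<^bsub>G\<^esub> h \<otimes>\<^bsub>G\<^esub> g \<otimes>\<^bsub>G\<^esub> h))] \<subseteq> L"
proof -
  have hc: "h \<in> carrier G" using H(1,3) F_c by blast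
  have gc: "g \<in> carrier G" using H(2,4) F_c by blast
  have e: "inv\<^bsub>G\<^esub> (inv\<^bsub>G\<^esub> h \<otimes>\<^bsub>G\<^esub> g \<otimes>\<^bsub>G\<^esub> h) = inv\<^bsub>G\<^esub> h \<otimes>\<^bsub>G\<^esub> inv\<^bsub>G\<^esub> g \<otimes>\<^bsub>G\<^esub> h"
    using hc gc by (simp add: G.inv_mult_group G.m_assoc)
  have ig: "inv\<^bsub>G\<^esub> g \<in> H2" using subgroup.m_inv_closed[OF F_sub[OF H(2)] H(4)] .
  have c1: "inv\<^bsub>G\<^esub> (inv\<^bsub>G\<^esub> h \<otimes>\<^bsub>G\<^esub> g \<otimes>\<^bsub>G\<^esub> h) \<in> conj_set G h H2"
    unfolding e conj_set_def using ig by (rule imageI)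
  have c2: "conj_set G h H2 \<in> F" using F_conj[OF H(2) hc] .
  have ih: "inv\<^bsub>G\<^esub> h \<in> H1" using subgroup.m_inv_closed[OF F_sub[OF H(1)] H(3)] .
  show ?thesis using c1 c2 ih H by (simp add: L_mem)
qed

lemma RS_in: "rels_in L RS"
  unfolding rels_in_def
proof (intro ballI, clarify)
  fix u v assume "(u, v) \<in> RS"
  then have "(\<exists>H g g'. (u, v) = ([(H, g), (H, g')], [(H, g \<otimes>\<^bsub>G\<^esub> g')]) \<and> H \<in> F \<and> g \<in> H \<and> g' \<in> H)
    \<or> (\<exists>H. (u, v) = ([(H, \<one>\<^bsub>G\<^esub>)], []) \<and> H \<in> F)
    \<or> (\<exists>H1 H2 h g. (u, v) = ([(H1, inv\<^bsub>G\<^esub> h), (H2, g), (H1, h),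
        (conj_set G h H2, inv\<^bsub>G\<^esub> (inv\<^bsub>G\<^esub> h \<otimes>\<^bsub>G\<^esub> g \<otimes>\<^bsub>G\<^esub> h))], []) \<and> H1 \<in> F \<and> H2 \<in> F \<and> h \<in> H1 \<and> g \<in> H2)"
    unfolding as_rels_def by blast
  then show "set u \<subseteq> L \<and> set v \<subseteq> L"
  proof (elim disjE exE conjE)
    fix H g g' assume "(u, v) = ([(H, g), (H, g')], [(H, g \<otimes>\<^bsub>G\<^esub> g')])" "H \<in> F" "g \<in> H" "g' \<in> H"
    then show ?thesis using rel_prod_in[of H g g'] by simp
  next
    fix H assume "(u, v) = ([(H, \<one>\<^bsub>G\<^esub>)], [])" "H \<in> F"
    then show ?thesis using rel_one_in[of H] by simp
  next
    fix H1 H2 h g assume "(u, v) = ([(H1, inv\<^bsub>G\<^esub> h), (H2, g), (H1, h),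
        (conj_set G h H2, inv\<^bsub>G\<^esub> (inv\<^bsub>G\<^esub> h \<otimes>\<^bsub>G\<^esub> g \<otimes>\<^bsub>G\<^esub> h))], [])"
      "H1 \<in> F" "H2 \<in> F" "h \<in> H1" "g \<in> H2"
    then show ?thesis using rel_act_in[of H1 H2 h g] by simp
  qed
qed

lemma clS_eq: "set u \<subseteq> L \<Longrightarrow> set v \<subseteq> L \<Longrightarrow> clS u = clS v \<longleftrightarrow> word_cong RS u v"
  by (rule word_class_eq)

lemma clS_mult: "set u \<subseteq> L \<Longrightarrow> set v \<subseteq> L \<Longrightarrow> clS u \<otimes>\<^bsub>S\<^esub> clS v = clS (u @ v)"
  unfolding S_def' by (rule wm_mult)

lemma clS_one: "\<one>\<^bsub>S\<^esub> = clS []"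
  unfolding S_def' by (rule wm_one)

lemma clS_closed: "set w \<subseteq> L \<Longrightarrow> clS w \<in> carrier S"
  unfolding S_def' wm_carrier by blast

lemma S_carrier: "carrier S = clS ` {w. set w \<subseteq> L}"
  unfolding S_def' by (rule wm_carrier)

lemma rel_prod: "H \<in> F \<Longrightarrow> g \<in> H \<Longrightarrow> g' \<in> H \<Longrightarrow> ([(H, g), (H, g')], [(H, g \<otimes>\<^bsub>G\<^esub> g')]) \<in> RS"
  unfolding as_rels_def by blast

lemma rel_one: "H \<in> F \<Longrightarrow> ([(H, \<one>\<^bsub>G\<^esub>)], []) \<in> RS"
  unfolding as_rels_def by blast

lemma rel_act: "H1 \<in> F \<Longrightarrow> H2 \<in> F \<Longrightarrow> h \<in> H1 \<Longrightarrow> g \<in> H2 \<Longrightarrow>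
   ([(H1, inv\<^bsub>G\<^esub> h), (H2, g), (H1, h),
        (conj_set G h H2, inv\<^bsub>G\<^esub> (inv\<^bsub>G\<^esub> h \<otimes>\<^bsub>G\<^esub> g \<otimes>\<^bsub>G\<^esub> h))], []) \<in> RS"
  unfolding as_rels_def by blast

lemma sing_L: "H \<in> F \<Longrightarrow> g \<in> H \<Longrightarrow> set [(H, g)] \<subseteq> L"
  by (simp add: L_mem)

lemma \<iota>_closed: "H \<in> F \<Longrightarrow> g \<in> H \<Longrightarrow> \<iota> H g \<in> carrier S"
  by (rule clS_closed[OF sing_L])

lemma \<iota>_mult: "H \<in> F \<Longrightarrow> g \<in> H \<Longrightarrow> g' \<in> H \<Longrightarrow> \<iota> H g \<otimes>\<^bsub>S\<^esub> \<iota> H g' = \<iota> H (g \<otimes>\<^bsub>G\<^esub> g')"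
proof -
  assume H: "H \<in> F" "g \<in> H" "g' \<in> H"
  then have gg: "g \<otimes>\<^bsub>G\<^esub> g' \<in> H" using subgroup.m_closed[OF F_sub[OF H(1)]] by blast
  have e1: "\<iota> H g \<otimes>\<^bsub>S\<^esub> \<iota> H g' = clS ([(H, g)] @ [(H, g')])"
    by (rule clS_mult[OF sing_L[OF H(1,2)] sing_L[OF H(1,3)]])
  have s2: "set ([(H, g)] @ [(H, g')]) \<subseteq> L" using sing_L[OF H(1,2)] sing_L[OF H(1,3)] by simp
  have e2: "clS ([(H, g)] @ [(H, g')]) = \<iota> H (g \<otimes>\<^bsub>G\<^esub> g')"
    using word_cong.base[OF rel_prod[OF H]] clS_eq[OF s2 sing_L[OF H(1) gg]] by simp
  show ?thesis using e1 e2 by (rule HOL.trans)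
qed

lemma \<iota>_one: "H \<in> F \<Longrightarrow> \<iota> H \<one>\<^bsub>G\<^esub> = \<one>\<^bsub>S\<^esub>"
proof -
  assume H: "H \<in> F"
  then have o: "\<one>\<^bsub>G\<^esub> \<in> H" using subgroup.one_closed[OF F_sub[OF H]] by blast
  have "\<iota> H \<one>\<^bsub>G\<^esub> = clS []"
    using word_cong.base[OF rel_one[OF H]] clS_eq[OF sing_L[OF H o], of "[]"] by simp
  then show ?thesis by (simp only: clS_one)
qed

lemma S_group: "group S"
  unfolding S_def'
proof (rule wm_group)
  fix x assume "x \<in> L"
  then obtain H g where x: "x = (H, g)" "H \<in> F" "g \<in> H" by (auto simp: as_letters_def)
  have ig: "inv\<^bsub>G\<^esub> g \<in> H" using subgroup.m_inv_closed[OF F_sub[OF x(2)] x(3)] .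
  have gc: "g \<in> carrier G" using x F_c by blast
  have "word_cong RS [(H, inv\<^bsub>G\<^esub> g), (H, g)] [(H, inv\<^bsub>G\<^esub> g \<otimes>\<^bsub>G\<^esub> g)]"
    using rel_prod[OF x(2) ig x(3)] by (rule word_cong.base)
  moreover have "word_cong RS [(H, inv\<^bsub>G\<^esub> g \<otimes>\<^bsub>G\<^esub> g)] []"
    using rel_one[OF x(2)] gc G.l_inv[OF gc] by (simp add: word_cong.base)
  ultimately have "word_cong RS [(H, inv\<^bsub>G\<^esub> g), (H, g)] []" by (rule word_cong.trans)
  then have "word_cong RS [(H, inv\<^bsub>G\<^esub> g), x] []" using x(1) by simp
  moreover have "(H, inv\<^bsub>G\<^esub> g) \<in> L" using ig x(2) by (simp add: L_mem)
  ultimately show "\<exists>y\<in>L. word_cong RS [y, x] []" by blast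
qed

sublocale S: group S by (rule S_group)

lemma \<iota>_inv: "H \<in> F \<Longrightarrow> g \<in> H \<Longrightarrow> inv\<^bsub>S\<^esub> (\<iota> H g) = \<iota> H (inv\<^bsub>G\<^esub> g)"
proof -
  assume H: "H \<in> F" "g \<in> H"
  have ig: "inv\<^bsub>G\<^esub> g \<in> H" using subgroup.m_inv_closed[OF F_sub[OF H(1)] H(2)] .
  have gc: "g \<in> carrier G" using H F_c by blast
  have "\<iota> H (inv\<^bsub>G\<^esub> g) \<otimes>\<^bsub>S\<^esub> \<iota> H g = \<iota> H (inv\<^bsub>G\<^esub> g \<otimes>\<^bsub>G\<^esub> g)"
    by (rule \<iota>_mult[OF H(1) ig H(2)])
  also have "\<dots> = \<one>\<^bsub>S\<^esub>" unfolding G.l_inv[OF gc] by (rule \<iota>_one[OF H(1)])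
  finally have e: "\<iota> H (inv\<^bsub>G\<^esub> g) \<otimes>\<^bsub>S\<^esub> \<iota> H g = \<one>\<^bsub>S\<^esub>" .
  show ?thesis by (rule S.inv_equality[OF e \<iota>_closed[OF H] \<iota>_closed[OF H(1) ig]])
qed

lemma \<iota>_pow_nat: "H \<in> F \<Longrightarrow> g \<in> H \<Longrightarrow> \<iota> H (g [^]\<^bsub>G\<^esub> (n::nat)) = \<iota> H g [^]\<^bsub>S\<^esub> n"
proof (induction n)
  case 0 then show ?case using \<iota>_one[of H] by simp
next
  case (Suc n)
  have "g [^]\<^bsub>G\<^esub> (int n) \<in> H" using G.subgroup_int_pow_closed[OF F_sub[OF Suc.prems(1)] Suc.prems(2)] .
  then have gn: "g [^]\<^bsub>G\<^esub> n \<in> H" by (simp add: int_pow_int)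
  have "\<iota> H (g [^]\<^bsub>G\<^esub> Suc n) = \<iota> H (g [^]\<^bsub>G\<^esub> n \<otimes>\<^bsub>G\<^esub> g)" by simp
  also have "\<dots> = \<iota> H (g [^]\<^bsub>G\<^esub> n) \<otimes>\<^bsub>S\<^esub> \<iota> H g" by (rule \<iota>_mult[OF Suc.prems(1) gn Suc.prems(2), symmetric])
  also have "\<dots> = \<iota> H g [^]\<^bsub>S\<^esub> Suc n" using Suc by simp
  finally show ?case .
qed

lemma \<iota>_pow_neg: "H \<in> F \<Longrightarrow> g \<in> H \<Longrightarrow> \<iota> H (g [^]\<^bsub>G\<^esub> (- int n)) = \<iota> H g [^]\<^bsub>S\<^esub> (- int n)"
proof -
  assume H: "H \<in> F" "g \<in> H"
  have "g [^]\<^bsub>G\<^esub> (int n) \<in> H" using G.subgroup_int_pow_closed[OF F_sub[OF H(1)] H(2)] .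
  then have gn: "g [^]\<^bsub>G\<^esub> n \<in> H" unfolding int_pow_int .
  have gc: "g \<in> carrier G" using H F_c by blast
  have e1: "g [^]\<^bsub>G\<^esub> (- int n) = inv\<^bsub>G\<^esub> (g [^]\<^bsub>G\<^esub> n)" by (rule G.int_pow_neg_int[OF gc])
  have e2: "\<iota> H g [^]\<^bsub>S\<^esub> (- int n) = inv\<^bsub>S\<^esub> (\<iota> H g [^]\<^bsub>S\<^esub> n)" by (rule S.int_pow_neg_int[OF \<iota>_closed[OF H]])
  show ?thesis unfolding e1 e2 \<iota>_pow_nat[OF H, symmetric] by (rule \<iota>_inv[OF H(1) gn, symmetric])
qed

lemma \<iota>_pow: "H \<in> F \<Longrightarrow> g \<in> H \<Longrightarrow> \<iota> H (g [^]\<^bsub>G\<^esub> (k::int)) = \<iota> H g [^]\<^bsub>S\<^esub> k"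
proof -
  assume H: "H \<in> F" "g \<in> H"
  show ?thesis
  proof (cases "0 \<le> k")
    case True
    then obtain n where k: "k = int n" by (metis nonneg_eq_int)
    show ?thesis unfolding k int_pow_int by (rule \<iota>_pow_nat[OF H])
  next
    case False
    then obtain n where k: "k = - int n" by (metis neg_int_cases less_le not_le)
    show ?thesis unfolding k by (rule \<iota>_pow_neg[OF H])
  qed
qed

lemma \<iota>_act:
  assumes "H1 \<in> F" "H2 \<in> F" "h \<in> H1" "g \<in> H2"
  shows "\<iota> H1 (inv\<^bsub>G\<^esub> h) \<otimes>\<^bsub>S\<^esub> \<iota> H2 g \<otimes>\<^bsub>S\<^esub> \<iota> H1 h
       = \<iota> (conj_set G h H2) (inv\<^bsub>G\<^esub> h \<otimes>\<^bsub>G\<^esub> g \<otimes>\<^bsub>G\<^esub> h)"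
proof -
  define K where "K = conj_set G h H2"
  define y where "y = inv\<^bsub>G\<^esub> h \<otimes>\<^bsub>G\<^esub> g \<otimes>\<^bsub>G\<^esub> h"
  have sl: "set [(H1, inv\<^bsub>G\<^esub> h), (H2, g), (H1, h), (K, inv\<^bsub>G\<^esub> y)] \<subseteq> L"
    unfolding K_def y_def by (rule rel_act_in[OF assms])
  have KF: "K \<in> F" and iyK: "inv\<^bsub>G\<^esub> y \<in> K" using sl by (simp_all add: L_mem)
  have yc: "y \<in> carrier G" using assms F_c unfolding y_def by blast
  have yK: "y \<in> K" using subgroup.m_inv_closed[OF F_sub[OF KF] iyK] yc by simp
  have s3: "set [(H1, inv\<^bsub>G\<^esub> h), (H2, g), (H1, h)] \<subseteq> L" using sl by simp
  have s1: "set [(K, inv\<^bsub>G\<^esub> y)] \<subseteq> L" using sl by simp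
  have wc: "word_cong RS ([(H1, inv\<^bsub>G\<^esub> h), (H2, g), (H1, h)] @ [(K, inv\<^bsub>G\<^esub> y)]) []"
    using word_cong.base[OF rel_act[OF assms]] unfolding K_def y_def by simp
  have e: "clS ([(H1, inv\<^bsub>G\<^esub> h), (H2, g), (H1, h)] @ [(K, inv\<^bsub>G\<^esub> y)]) = \<one>\<^bsub>S\<^esub>"
    unfolding clS_one using iffD2[OF clS_eq wc] sl by simp
  have e2: "clS [(H1, inv\<^bsub>G\<^esub> h), (H2, g), (H1, h)] \<otimes>\<^bsub>S\<^esub> \<iota> K (inv\<^bsub>G\<^esub> y) = \<one>\<^bsub>S\<^esub>"
    unfolding clS_mult[OF s3 s1] by (rule e)
  have "clS [(H1, inv\<^bsub>G\<^esub> h), (H2, g), (H1, h)] = inv\<^bsub>S\<^esub> (\<iota> K (inv\<^bsub>G\<^esub> y))"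
    by (rule S.inv_equality[symmetric, OF e2 clS_closed[OF s1] clS_closed[OF s3]])
  also have "\<dots> = \<iota> K y" using \<iota>_inv[OF KF iyK] yc by simp
  finally have e3: "clS [(H1, inv\<^bsub>G\<^esub> h), (H2, g), (H1, h)] = \<iota> K y" .
  have s11: "set [(H1, inv\<^bsub>G\<^esub> h)] \<subseteq> L" "set [(H2, g)] \<subseteq> L" "set [(H1, h)] \<subseteq> L" using s3 by simp_all
  have "\<iota> H1 (inv\<^bsub>G\<^esub> h) \<otimes>\<^bsub>S\<^esub> \<iota> H2 g \<otimes>\<^bsub>S\<^esub> \<iota> H1 h = clS [(H1, inv\<^bsub>G\<^esub> h), (H2, g), (H1, h)]"
    using s11 by (simp add: clS_mult)
  then show ?thesis using e3 by (simp add: K_def y_def)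
qed

end


lemma ev_replicate: "monoid M \<Longrightarrow> f l \<in> carrier M \<Longrightarrow> ev M f (replicate n l) = f l [^]\<^bsub>M\<^esub> n"
  by (induction n) (simp_all add: monoid.nat_pow_Suc2 del: nat_pow_Suc)

lemma ev_hom:
  assumes "h \<in> hom M N" "group M" "group N" "\<And>l. l \<in> set w \<Longrightarrow> f l \<in> carrier M"
  shows "h (ev M f w) = ev N (\<lambda>l. h (f l)) w"
  using assms(4)
proof (induction w)
  case Nil
  have "group_hom M N h" using assms(1-3) by (simp add: group_hom_def group_hom_axioms_def)
  then show ?case by (simp add: group_hom.hom_one)
next
  case (Cons l w)
  then show ?case using assms(1) ev_closed[OF group.is_monoid[OF assms(2)], of w f] by (simp add: hom_mult)
qed

context mc
begin

lemma eval_word_ev: "eval_word G w = ev G snd w"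
  by (induction w) (auto simp: eval_word_def ev_def)

lemma phi_eq: "active_sum_map G F = induced G snd"
  by (rule ext) (simp add: active_sum_map_def induced_def eval_word_ev)

lemma RS_cases:
  assumes "(u, v) \<in> RS"
  shows "(\<exists>H g g'. (u, v) = ([(H, g), (H, g')], [(H, g \<otimes>\<^bsub>G\<^esub> g')]) \<and> H \<in> F \<and> g \<in> H \<and> g' \<in> H)
    \<or> (\<exists>H. (u, v) = ([(H, \<one>\<^bsub>G\<^esub>)], []) \<and> H \<in> F)
    \<or> (\<exists>H1 H2 h g. (u, v) = ([(H1, inv\<^bsub>G\<^esub> h), (H2, g), (H1, h),
        (conj_set G h H2, inv\<^bsub>G\<^esub> (inv\<^bsub>G\<^esub> h \<otimes>\<^bsub>G\<^esub> g \<otimes>\<^bsub>G\<^esub> h))], []) \<and> H1 \<in> F \<and> H2 \<in> F \<and> h \<in> H1 \<and> g \<in> H2)"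
  using assms unfolding as_rels_def by blast

lemma snd_L: "l \<in> L \<Longrightarrow> snd l \<in> carrier G"
  using F_c by (cases l) (auto simp: L_mem)

lemma phi_rels: "(u, v) \<in> RS \<Longrightarrow> ev G snd u = ev G snd v"
proof -
  assume "(u, v) \<in> RS"
  from RS_cases[OF this] show ?thesis
  proof (elim disjE exE conjE)
    fix H g g' assume uv: "(u, v) = ([(H, g), (H, g')], [(H, g \<otimes>\<^bsub>G\<^esub> g')])" "H \<in> F" "g \<in> H" "g' \<in> H"
    then have "g \<in> carrier G" "g' \<in> carrier G" using F_c by blast+
    then show ?thesis using uv by simp
  next
    fix H assume "(u, v) = ([(H, \<one>\<^bsub>G\<^esub>)], [])" "H \<in> F"
    then show ?thesis by simp
  next
    fix H1 H2 h g assume uv: "(u, v) = ([(H1, inv\<^bsub>G\<^esub> h), (H2, g), (H1, h),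
        (conj_set G h H2, inv\<^bsub>G\<^esub> (inv\<^bsub>G\<^esub> h \<otimes>\<^bsub>G\<^esub> g \<otimes>\<^bsub>G\<^esub> h))], [])"
      "H1 \<in> F" "H2 \<in> F" "h \<in> H1" "g \<in> H2"
    then have hc: "h \<in> carrier G" and gc: "g \<in> carrier G" using F_c by blast+
    have k: "\<And>y. y \<in> carrier G \<Longrightarrow> inv\<^bsub>G\<^esub> h \<otimes>\<^bsub>G\<^esub> (g \<otimes>\<^bsub>G\<^esub> (h \<otimes>\<^bsub>G\<^esub> (inv\<^bsub>G\<^esub> y \<otimes>\<^bsub>G\<^esub> \<one>\<^bsub>G\<^esub>)))
        = (inv\<^bsub>G\<^esub> h \<otimes>\<^bsub>G\<^esub> g \<otimes>\<^bsub>G\<^esub> h) \<otimes>\<^bsub>G\<^esub> inv\<^bsub>G\<^esub> y"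
      using hc gc by (simp add: G.m_assoc)
    have "inv\<^bsub>G\<^esub> h \<otimes>\<^bsub>G\<^esub> (g \<otimes>\<^bsub>G\<^esub> (h \<otimes>\<^bsub>G\<^esub> (inv\<^bsub>G\<^esub> (inv\<^bsub>G\<^esub> h \<otimes>\<^bsub>G\<^esub> g \<otimes>\<^bsub>G\<^esub> h) \<otimes>\<^bsub>G\<^esub> \<one>\<^bsub>G\<^esub>)))
        = (inv\<^bsub>G\<^esub> h \<otimes>\<^bsub>G\<^esub> g \<otimes>\<^bsub>G\<^esub> h) \<otimes>\<^bsub>G\<^esub> inv\<^bsub>G\<^esub> (inv\<^bsub>G\<^esub> h \<otimes>\<^bsub>G\<^esub> g \<otimes>\<^bsub>G\<^esub> h)"
      by (rule k) (use hc gc in simp)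
    also have "\<dots> = \<one>\<^bsub>G\<^esub>" using hc gc by (simp only: G.r_inv G.m_closed G.inv_closed)
    finally show ?thesis using uv by simp
  qed
qed

lemma phi_hom: "induced G snd \<in> hom S G"
  unfolding S_def' by (rule induced_hom[OF RS_in G.monoid_axioms snd_L phi_rels])

lemma phi_cls: "set w \<subseteq> L \<Longrightarrow> induced G snd (clS w) = ev G snd w"
  by (rule induced_class[OF _ RS_in G.monoid_axioms snd_L phi_rels])

lemma phi_iota: "H \<in> F \<Longrightarrow> g \<in> H \<Longrightarrow> induced G snd (\<iota> H g) = g"
proof -
  assume H: "H \<in> F" "g \<in> H"
  then have "g \<in> carrier G" using F_c by blast
  then show ?thesis using phi_cls[OF sing_L[OF H]] by simp
qed

definition HH :: "gen \<Rightarrow> (gen \<times> bool) list set set" where "HH x = (case x of GA \<Rightarrow> A | GB \<Rightarrow> B)"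
definition gg :: "gen \<Rightarrow> (gen \<times> bool) list set" where "gg x = (case x of GA \<Rightarrow> a | GB \<Rightarrow> b)"
definition fpsi :: "gen \<times> bool \<Rightarrow> ((gen \<times> bool) list set set \<times> (gen \<times> bool) list set) list set" where
  "fpsi l = \<iota> (HH (fst l)) (if snd l then inv\<^bsub>G\<^esub> (gg (fst l)) else gg (fst l))"

lemma HH_F: "HH x \<in> F" by (cases x) (simp_all add: HH_def A_in_F B_in_F)
lemma gg_HH: "gg x \<in> HH x" by (cases x) (simp_all add: HH_def gg_def a_in_A b_in_B)
lemma gg_inv_HH: "inv\<^bsub>G\<^esub> (gg x) \<in> HH x"
  using subgroup.m_inv_closed[OF F_sub[OF HH_F] gg_HH] .
lemma gg_cl: "gg x = cl [(x, False)]" by (cases x) (simp_all add: gg_def a_def' b_def')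

lemma fpsi_closed: "fpsi l \<in> carrier S"
  unfolding fpsi_def using \<iota>_closed[OF HH_F gg_HH] \<iota>_closed[OF HH_F gg_inv_HH] by simp

lemma fpsi_F: "fpsi (x, False) = \<iota> (HH x) (gg x)" by (simp add: fpsi_def)
lemma fpsi_T: "fpsi (x, True) = inv\<^bsub>S\<^esub> (\<iota> (HH x) (gg x))"
  by (simp add: fpsi_def \<iota>_inv[OF HH_F gg_HH])

lemma ev_wpow: "ev S fpsi (wpow x k) = \<iota> (HH x) (gg x [^]\<^bsub>G\<^esub> k)"
proof -
  have ic: "\<iota> (HH x) (gg x) \<in> carrier S" by (rule \<iota>_closed[OF HH_F gg_HH])
  have r: "\<iota> (HH x) (gg x [^]\<^bsub>G\<^esub> k) = \<iota> (HH x) (gg x) [^]\<^bsub>S\<^esub> k" by (rule \<iota>_pow[OF HH_F gg_HH])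
  show ?thesis
  proof (cases "0 \<le> k")
    case True
    then obtain n where k: "k = int n" by (metis nonneg_eq_int)
    have "ev S fpsi (wpow x k) = fpsi (x, False) [^]\<^bsub>S\<^esub> n"
      unfolding k wpow_def by (simp add: ev_replicate[of S fpsi, OF S.monoid_axioms fpsi_closed])
    then have e1: "ev S fpsi (wpow x k) = \<iota> (HH x) (gg x) [^]\<^bsub>S\<^esub> n" by (simp only: fpsi_F)
    have e2: "\<iota> (HH x) (gg x) [^]\<^bsub>S\<^esub> n = \<iota> (HH x) (gg x) [^]\<^bsub>S\<^esub> k" by (simp only: k int_pow_int)
    show ?thesis using e1 e2 r by simp
  next
    case False
    then obtain n where k: "k = - int n" "0 < n" by (metis neg_int_cases less_le not_le)
    have "ev S fpsi (wpow x k) = fpsi (x, True) [^]\<^bsub>S\<^esub> n"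
      unfolding wpow_def using k by (simp add: ev_replicate[of S fpsi, OF S.monoid_axioms fpsi_closed])
    also have "\<dots> = inv\<^bsub>S\<^esub> (\<iota> (HH x) (gg x) [^]\<^bsub>S\<^esub> n)" unfolding fpsi_T by (rule S.nat_pow_inv[OF ic])
    also have "\<dots> = \<iota> (HH x) (gg x) [^]\<^bsub>S\<^esub> k" unfolding k by (rule S.int_pow_neg_int[OF ic, symmetric])
    finally show ?thesis unfolding r .
  qed
qed

end


context mc
begin

lemma key: "\<iota> A (a [^]\<^bsub>G\<^esub> t) = \<iota> B z"
proof -
  have cA: "c \<in> A" unfolding c_def by (rule apow_in_A)
  have icA: "inv\<^bsub>G\<^esub> c \<in> A" using subgroup.m_inv_closed[OF A_sub cA] .
  have ibB: "inv\<^bsub>G\<^esub> b \<in> B" using subgroup.m_inv_closed[OF B_sub b_in_B] .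
  have dA: "inv\<^bsub>G\<^esub> b \<otimes>\<^bsub>G\<^esub> c \<otimes>\<^bsub>G\<^esub> b \<in> A" unfolding d_eq by (rule apow_in_A)
  have i1: "\<iota> A (inv\<^bsub>G\<^esub> c) \<otimes>\<^bsub>S\<^esub> \<iota> B (inv\<^bsub>G\<^esub> b) \<otimes>\<^bsub>S\<^esub> \<iota> A c = \<iota> B yy"
    using \<iota>_act[OF A_in_F B_in_F cA ibB] unfolding conj_cB yy_def .
  have i2: "\<iota> B (inv\<^bsub>G\<^esub> b) \<otimes>\<^bsub>S\<^esub> \<iota> A c \<otimes>\<^bsub>S\<^esub> \<iota> B b = \<iota> A (inv\<^bsub>G\<^esub> b \<otimes>\<^bsub>G\<^esub> c \<otimes>\<^bsub>G\<^esub> b)"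
    using \<iota>_act[OF B_in_F A_in_F b_in_B cA] unfolding conj_bA .
  have "\<iota> A (a [^]\<^bsub>G\<^esub> t) = \<iota> A (inv\<^bsub>G\<^esub> c \<otimes>\<^bsub>G\<^esub> (inv\<^bsub>G\<^esub> b \<otimes>\<^bsub>G\<^esub> c \<otimes>\<^bsub>G\<^esub> b))"
    unfolding G1 z_eq ..
  also have "\<dots> = \<iota> A (inv\<^bsub>G\<^esub> c) \<otimes>\<^bsub>S\<^esub> \<iota> A (inv\<^bsub>G\<^esub> b \<otimes>\<^bsub>G\<^esub> c \<otimes>\<^bsub>G\<^esub> b)"
    by (rule \<iota>_mult[OF A_in_F icA dA, symmetric])
  also have "\<dots> = \<iota> A (inv\<^bsub>G\<^esub> c) \<otimes>\<^bsub>S\<^esub> (\<iota> B (inv\<^bsub>G\<^esub> b) \<otimes>\<^bsub>S\<^esub> \<iota> A c \<otimes>\<^bsub>S\<^esub> \<iota> B b)"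
    unfolding i2 ..
  also have "\<dots> = (\<iota> A (inv\<^bsub>G\<^esub> c) \<otimes>\<^bsub>S\<^esub> \<iota> B (inv\<^bsub>G\<^esub> b) \<otimes>\<^bsub>S\<^esub> \<iota> A c) \<otimes>\<^bsub>S\<^esub> \<iota> B b"
    using \<iota>_closed[OF A_in_F icA] \<iota>_closed[OF B_in_F ibB] \<iota>_closed[OF A_in_F cA] \<iota>_closed[OF B_in_F b_in_B]
    by (simp add: S.m_assoc)
  also have "\<dots> = \<iota> B yy \<otimes>\<^bsub>S\<^esub> \<iota> B b" unfolding i1 ..
  also have "\<dots> = \<iota> B (yy \<otimes>\<^bsub>G\<^esub> b)" by (rule \<iota>_mult[OF B_in_F yy_in_B b_in_B])
  also have "\<dots> = \<iota> B z" unfolding yy_b ..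
  finally show ?thesis .
qed

lemma psi_rels: "(u, v) \<in> RG \<Longrightarrow> ev S fpsi u = ev S fpsi v"
proof -
  assume uv: "(u, v) \<in> RG"
  show ?thesis
  proof (cases "(u, v) \<in> free_rels UNIV")
    case True
    then obtain x e where uv': "u = [(x, e), (x, \<not> e)]" "v = []" unfolding free_rels_def by blast
    have ic: "\<iota> (HH x) (gg x) \<in> carrier S" by (rule \<iota>_closed[OF HH_F gg_HH])
    show ?thesis
    proof (cases e)
      case True
      then show ?thesis using uv' ic by (simp add: fpsi_F fpsi_T)
    next
      case False
      then show ?thesis using uv' ic by (simp add: fpsi_F fpsi_T)
    qed
  next
    case False
    then have "(u, v) \<in> metacyclic_rels m s t r" using uv by blast
    then have "(u, v) = (wpow GA (int m), []) \<or> (u, v) = (wpow GB (int s), wpow GA t)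
        \<or> (u, v) = ([(GB, True), (GA, False), (GB, False)], wpow GA r)"
      unfolding metacyclic_rels_def by blast
    then show ?thesis
    proof (elim disjE)
      assume "(u, v) = (wpow GA (int m), [])"
      then show ?thesis using \<iota>_one[OF A_in_F] by (simp add: ev_wpow HH_def gg_def rel1)
    next
      assume "(u, v) = (wpow GB (int s), wpow GA t)"
      then show ?thesis using key by (simp add: ev_wpow HH_def gg_def)
    next
      assume uv2: "(u, v) = ([(GB, True), (GA, False), (GB, False)], wpow GA r)"
      have ibB: "inv\<^bsub>G\<^esub> b \<in> B" using subgroup.m_inv_closed[OF B_sub b_in_B] .
      have "ev S fpsi [(GB, True), (GA, False), (GB, False)]
          = \<iota> B (inv\<^bsub>G\<^esub> b) \<otimes>\<^bsub>S\<^esub> (\<iota> A a \<otimes>\<^bsub>S\<^esub> (\<iota> B b \<otimes>\<^bsub>S\<^esub> \<one>\<^bsub>S\<^esub>))"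
        by (simp add: fpsi_def HH_def gg_def)
      also have "\<dots> = \<iota> B (inv\<^bsub>G\<^esub> b) \<otimes>\<^bsub>S\<^esub> \<iota> A a \<otimes>\<^bsub>S\<^esub> \<iota> B b"
        using \<iota>_closed[OF B_in_F ibB] \<iota>_closed[OF A_in_F a_in_A] \<iota>_closed[OF B_in_F b_in_B]
        by (simp add: S.m_assoc)
      also have "\<dots> = \<iota> A (a [^]\<^bsub>G\<^esub> r)"
        using \<iota>_act[OF B_in_F A_in_F b_in_B a_in_A] unfolding conj_bA rel3 .
      also have "\<dots> = ev S fpsi (wpow GA r)" by (simp add: ev_wpow HH_def gg_def)
      finally show ?thesis using uv2 by simp
    qed
  qed
qed

abbreviation "psi \<equiv> induced S fpsi"
abbreviation "phi \<equiv> induced G snd"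

lemma fpsi_closed': "l \<in> XG \<Longrightarrow> fpsi l \<in> carrier S" by (rule fpsi_closed)

lemma psi_hom: "psi \<in> hom G S"
proof -
  have "psi \<in> hom (word_monoid XG RG) S" by (rule induced_hom[OF RG_in S.monoid_axioms fpsi_closed' psi_rels])
  then show ?thesis by (simp only: G_def'[symmetric])
qed

lemma psi_cls: "psi (cl w) = ev S fpsi w"
  by (rule induced_class[OF _ RG_in S.monoid_axioms fpsi_closed' psi_rels]) simp

lemma psi_gh: "group_hom G S psi"
  using psi_hom G_group S_group by (simp add: group_hom_def group_hom_axioms_def)

lemma psi_mult: "x \<in> carrier G \<Longrightarrow> y \<in> carrier G \<Longrightarrow> psi (x \<otimes>\<^bsub>G\<^esub> y) = psi x \<otimes>\<^bsub>S\<^esub> psi y"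
  by (rule hom_mult[OF psi_hom])

lemma psi_inv: "x \<in> carrier G \<Longrightarrow> psi (inv\<^bsub>G\<^esub> x) = inv\<^bsub>S\<^esub> (psi x)"
  by (rule group_hom.hom_inv[OF psi_gh])

lemma psi_letter: "psi (cl [(x, False)]) = \<iota> (HH x) (gg x)"
proof -
  have "psi (cl [(x, False)]) = fpsi (x, False) \<otimes>\<^bsub>S\<^esub> \<one>\<^bsub>S\<^esub>" unfolding psi_cls by simp
  then show ?thesis using fpsi_closed[of "(x, False)"] by (simp add: fpsi_F)
qed

lemma psi_gg: "psi (gg x) = \<iota> (HH x) (gg x)"
proof -
  have "psi (gg x) = psi (cl [(x, False)])" by (simp only: gg_cl)
  then show ?thesis using psi_letter by simp
qed

lemma base_case: "XX = A \<or> XX = B \<Longrightarrow> x \<in> XX \<Longrightarrow> psi x = \<iota> XX x"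
proof -
  assume XX: "XX = A \<or> XX = B" and x: "x \<in> XX"
  then obtain y where y: "XX = HH y" by (metis HH_def gen.simps(3) gen.simps(4))
  have "x \<in> generate G {gg y}" using x y by (cases y) (simp_all add: HH_def gg_def)
  then obtain k where k: "x = gg y [^]\<^bsub>G\<^esub> (k::int)"
    using G.generate_pow[of "gg y"] by (cases y) (auto simp: gg_def)
  have gc: "gg y \<in> carrier G" by (cases y) (simp_all add: gg_def)
  have "psi x = psi (gg y) [^]\<^bsub>S\<^esub> k" unfolding k by (rule group_hom.hom_int_pow[OF psi_gh gc])
  also have "\<dots> = \<iota> (HH y) (gg y) [^]\<^bsub>S\<^esub> k" unfolding psi_gg ..
  also have "\<dots> = \<iota> (HH y) (gg y [^]\<^bsub>G\<^esub> k)" by (rule \<iota>_pow[OF HH_F gg_HH, symmetric])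
  finally show ?thesis using k y by simp
qed

definition Q :: "(gen \<times> bool) list set \<Rightarrow> bool" where
  "Q h \<longleftrightarrow> (\<forall>K\<in>F. (\<forall>x\<in>K. psi x = \<iota> K x) \<longrightarrow>
      (\<forall>x\<in>K. psi (inv\<^bsub>G\<^esub> h \<otimes>\<^bsub>G\<^esub> x \<otimes>\<^bsub>G\<^esub> h) = \<iota> (conj_set G h K) (inv\<^bsub>G\<^esub> h \<otimes>\<^bsub>G\<^esub> x \<otimes>\<^bsub>G\<^esub> h)))"

lemma Q_one: "Q \<one>\<^bsub>G\<^esub>"
  unfolding Q_def
proof (intro ballI impI)
  fix K x assume K: "K \<in> F" "\<forall>x\<in>K. psi x = \<iota> K x" "x \<in> K"
  have xc: "x \<in> carrier G" using K F_c by blast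
  show "psi (inv\<^bsub>G\<^esub> \<one>\<^bsub>G\<^esub> \<otimes>\<^bsub>G\<^esub> x \<otimes>\<^bsub>G\<^esub> \<one>\<^bsub>G\<^esub>) = \<iota> (conj_set G \<one>\<^bsub>G\<^esub> K) (inv\<^bsub>G\<^esub> \<one>\<^bsub>G\<^esub> \<otimes>\<^bsub>G\<^esub> x \<otimes>\<^bsub>G\<^esub> \<one>\<^bsub>G\<^esub>)"
    using K xc G.conj_set_one[OF F_c[OF K(1)]] by simp
qed

lemma Q_gen:
  assumes "H1 \<in> F" "h \<in> H1" "psi h = \<iota> H1 h"
  shows "Q h"
  unfolding Q_def
proof (intro ballI impI)
  fix K x assume K: "K \<in> F" "\<forall>x\<in>K. psi x = \<iota> K x" "x \<in> K"
  have xc: "x \<in> carrier G" using K F_c by blast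
  have hc: "h \<in> carrier G" using assms F_c by blast
  have pi: "psi (inv\<^bsub>G\<^esub> h) = \<iota> H1 (inv\<^bsub>G\<^esub> h)"
    using psi_inv[OF hc] assms(3) \<iota>_inv[OF assms(1,2)] by simp
  have "psi (inv\<^bsub>G\<^esub> h \<otimes>\<^bsub>G\<^esub> x \<otimes>\<^bsub>G\<^esub> h) = psi (inv\<^bsub>G\<^esub> h) \<otimes>\<^bsub>S\<^esub> psi x \<otimes>\<^bsub>S\<^esub> psi h"
    using xc hc by (simp add: psi_mult)
  also have "\<dots> = \<iota> H1 (inv\<^bsub>G\<^esub> h) \<otimes>\<^bsub>S\<^esub> \<iota> K x \<otimes>\<^bsub>S\<^esub> \<iota> H1 h" using pi assms(3) K by simp
  also have "\<dots> = \<iota> (conj_set G h K) (inv\<^bsub>G\<^esub> h \<otimes>\<^bsub>G\<^esub> x \<otimes>\<^bsub>G\<^esub> h)" by (rule \<iota>_act[OF assms(1) K(1) assms(2) K(3)])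
  finally show "psi (inv\<^bsub>G\<^esub> h \<otimes>\<^bsub>G\<^esub> x \<otimes>\<^bsub>G\<^esub> h) = \<iota> (conj_set G h K) (inv\<^bsub>G\<^esub> h \<otimes>\<^bsub>G\<^esub> x \<otimes>\<^bsub>G\<^esub> h)" .
qed

lemma Q_mult:
  assumes "h1 \<in> carrier G" "h2 \<in> carrier G" "Q h1" "Q h2"
  shows "Q (h1 \<otimes>\<^bsub>G\<^esub> h2)"
  unfolding Q_def
proof (intro ballI impI)
  fix K x assume K: "K \<in> F" "\<forall>x\<in>K. psi x = \<iota> K x" "x \<in> K"
  have Kc: "K \<subseteq> carrier G" using F_c[OF K(1)] .
  have xc: "x \<in> carrier G" using K Kc by blast
  define K1 where "K1 = conj_set G h1 K"
  have K1F: "K1 \<in> F" unfolding K1_def by (rule F_conj[OF K(1) assms(1)])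
  have K1p: "\<forall>y\<in>K1. psi y = \<iota> K1 y"
  proof
    fix y assume "y \<in> K1"
    then obtain x' where x': "x' \<in> K" "y = inv\<^bsub>G\<^esub> h1 \<otimes>\<^bsub>G\<^esub> x' \<otimes>\<^bsub>G\<^esub> h1" unfolding K1_def conj_set_def by blast
    then show "psi y = \<iota> K1 y" using assms(3) K unfolding Q_def K1_def by blast
  qed
  have x1: "inv\<^bsub>G\<^esub> h1 \<otimes>\<^bsub>G\<^esub> x \<otimes>\<^bsub>G\<^esub> h1 \<in> K1" unfolding K1_def conj_set_def using K(3) by blast
  have "psi (inv\<^bsub>G\<^esub> h2 \<otimes>\<^bsub>G\<^esub> (inv\<^bsub>G\<^esub> h1 \<otimes>\<^bsub>G\<^esub> x \<otimes>\<^bsub>G\<^esub> h1) \<otimes>\<^bsub>G\<^esub> h2)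
      = \<iota> (conj_set G h2 K1) (inv\<^bsub>G\<^esub> h2 \<otimes>\<^bsub>G\<^esub> (inv\<^bsub>G\<^esub> h1 \<otimes>\<^bsub>G\<^esub> x \<otimes>\<^bsub>G\<^esub> h1) \<otimes>\<^bsub>G\<^esub> h2)"
    using assms(4) K1F K1p x1 unfolding Q_def by blast
  moreover have "conj_set G h2 K1 = conj_set G (h1 \<otimes>\<^bsub>G\<^esub> h2) K"
    unfolding K1_def by (rule G.conj_set_mult[OF Kc assms(1,2), symmetric])
  moreover have "inv\<^bsub>G\<^esub> (h1 \<otimes>\<^bsub>G\<^esub> h2) \<otimes>\<^bsub>G\<^esub> x \<otimes>\<^bsub>G\<^esub> (h1 \<otimes>\<^bsub>G\<^esub> h2) = inv\<^bsub>G\<^esub> h2 \<otimes>\<^bsub>G\<^esub> (inv\<^bsub>G\<^esub> h1 \<otimes>\<^bsub>G\<^esub> x \<otimes>\<^bsub>G\<^esub> h1) \<otimes>\<^bsub>G\<^esub> h2"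
    by (rule G.conj_mult_eq[OF xc assms(1,2)])
  ultimately show "psi (inv\<^bsub>G\<^esub> (h1 \<otimes>\<^bsub>G\<^esub> h2) \<otimes>\<^bsub>G\<^esub> x \<otimes>\<^bsub>G\<^esub> (h1 \<otimes>\<^bsub>G\<^esub> h2)) =
       \<iota> (conj_set G (h1 \<otimes>\<^bsub>G\<^esub> h2) K) (inv\<^bsub>G\<^esub> (h1 \<otimes>\<^bsub>G\<^esub> h2) \<otimes>\<^bsub>G\<^esub> x \<otimes>\<^bsub>G\<^esub> (h1 \<otimes>\<^bsub>G\<^esub> h2))"
    by simp
qed

lemma Q_letter: "Q (cl [l])"
proof -
  obtain x e where l: "l = (x, e)" by force
  show ?thesis
  proof (cases e)
    case False
    have "psi (gg x) = \<iota> (HH x) (gg x)" by (rule psi_gg)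
    then show ?thesis using Q_gen[OF HH_F gg_HH] l False gg_cl by simp
  next
    case True
    have gc: "gg x \<in> carrier G" using gg_HH[of x] F_c[OF HH_F] by blast
    have "psi (inv\<^bsub>G\<^esub> (gg x)) = \<iota> (HH x) (inv\<^bsub>G\<^esub> (gg x))"
      using psi_inv[OF gc] psi_gg \<iota>_inv[OF HH_F gg_HH] by simp
    moreover have "cl [l] = inv\<^bsub>G\<^esub> (gg x)" using l True by (simp add: cl_inv gg_cl)
    ultimately show ?thesis using Q_gen[OF HH_F gg_inv_HH] by simp
  qed
qed

lemma Q_all: "h \<in> carrier G \<Longrightarrow> Q h"
proof -
  assume "h \<in> carrier G"
  then obtain w where h: "h = cl w" by (auto simp: G_carrier)
  have "Q (cl w)"
  proof (induction w)
    case Nil then show ?case using Q_one by (simp add: cl_one)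
  next
    case (Cons l w)
    then show ?case using Q_mult[OF cl_closed cl_closed Q_letter Cons.IH] by (simp add: cl_Cons[of l w])
  qed
  then show ?thesis using h by simp
qed

lemma psi_F: "H \<in> F \<Longrightarrow> g \<in> H \<Longrightarrow> psi g = \<iota> H g"
proof -
  assume H: "H \<in> F" "g \<in> H"
  obtain h XX where hX: "h \<in> carrier G" "XX = A \<or> XX = B" "H = conj_set G h XX" by (rule F_cases[OF H(1)])
  then obtain x where x: "x \<in> XX" "g = inv\<^bsub>G\<^esub> h \<otimes>\<^bsub>G\<^esub> x \<otimes>\<^bsub>G\<^esub> h" using H(2) unfolding conj_set_def by blast
  have XF: "XX \<in> F" using hX(2) A_in_F B_in_F by blast
  have "\<forall>x\<in>XX. psi x = \<iota> XX x" using base_case[OF hX(2)] by blast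
  then show ?thesis using Q_all[OF hX(1)] XF x hX(3) unfolding Q_def by blast
qed

lemma phi_psi: "x \<in> carrier G \<Longrightarrow> phi (psi x) = x"
proof -
  assume "x \<in> carrier G"
  then obtain w where x: "x = cl w" by (auto simp: G_carrier)
  have pl: "phi (fpsi l) = cl [l]" for l
  proof -
    obtain y e where l: "l = (y, e)" by force
    show ?thesis
    proof (cases e)
      case False
      then show ?thesis using l phi_iota[OF HH_F gg_HH] by (simp add: fpsi_F gg_cl)
    next
      case True
      then show ?thesis using l phi_iota[OF HH_F gg_inv_HH] by (simp add: fpsi_def gg_cl cl_inv)
    qed
  qed
  have "phi (ev S fpsi w) = ev G (\<lambda>l. phi (fpsi l)) w"
    by (rule ev_hom[OF phi_hom S_group G_group fpsi_closed])
  also have "\<dots> = cl w"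
  proof (induction w)
    case Nil then show ?case by (simp add: cl_one)
  next
    case (Cons l w) then show ?case by (simp add: pl cl_Cons[of l w])
  qed
  finally show ?thesis using x psi_cls by simp
qed

lemma psi_phi: "XS \<in> carrier S \<Longrightarrow> psi (phi XS) = XS"
proof -
  assume "XS \<in> carrier S"
  then obtain w where w: "set w \<subseteq> L" "XS = clS w" by (auto simp: S_carrier)
  have "psi (ev G snd w) = ev S (\<lambda>l. psi (snd l)) w"
    by (rule ev_hom[OF psi_hom G_group S_group snd_L]) (use w in blast)
  also have "\<dots> = clS w" using w(1)
  proof (induction w)
    case Nil then show ?case by (simp add: clS_one)
  next
    case (Cons l w)
    obtain H g where l: "l = (H, g)" by force
    have Hg: "H \<in> F" "g \<in> H" using Cons.prems l by (simp_all add: L_mem)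
    have sw: "set w \<subseteq> L" using Cons.prems by simp
    have "ev S (\<lambda>l. psi (snd l)) (l # w) = \<iota> H g \<otimes>\<^bsub>S\<^esub> clS w"
      using Cons.IH[OF sw] psi_F[OF Hg] l by simp
    also have "\<dots> = clS ([(H, g)] @ w)" by (rule clS_mult[OF sing_L[OF Hg] sw])
    finally show ?case using l by simp
  qed
  finally show ?thesis using w phi_cls by simp
qed

theorem main: "is_active_sum G F"
  unfolding is_active_sum_def
proof (intro conjI ballI)
  show "\<And>H. H \<in> F \<Longrightarrow> subgroup H G" by (rule F_sub)
  show "generate G (\<Union>F) = carrier G" by (rule F_generate)
  show "\<And>H h. H \<in> F \<Longrightarrow> h \<in> carrier G \<Longrightarrow> conj_set G h H \<in> F" by (rule F_conj)
  have b: "bij_betw phi (carrier S) (carrier G)"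
  proof (rule bij_betw_byWitness[where f' = psi])
    show "\<forall>XS\<in>carrier S. psi (phi XS) = XS" using psi_phi by blast
    show "\<forall>x\<in>carrier G. phi (psi x) = x" using phi_psi by blast
    show "phi ` carrier S \<subseteq> carrier G" by (rule hom_carrier[OF phi_hom])
    show "psi ` carrier G \<subseteq> carrier S" by (rule hom_carrier[OF psi_hom])
  qed
  show "active_sum_map G F \<in> iso S G"
    unfolding phi_eq iso_def using phi_hom b by blast
qed

end


theorem theorem3p5:
  fixes m s :: nat and t r :: int
  assumes "0 < m" and "0 < s"
    and "r ^ s mod int m = 1 mod int m"
    and "int m dvd t * (r - 1)"
    and "gcd (int m) (r - 1) dvd t"
  shows "is_active_sum (metacyclic m s t r)
           ({conj_set (metacyclic m s t r) g (generate (metacyclic m s t r) {mc_a m s t r})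
               | g. g \<in> carrier (metacyclic m s t r)}
            \<union> {conj_set (metacyclic m s t r) g (generate (metacyclic m s t r) {mc_b m s t r})
               | g. g \<in> carrier (metacyclic m s t r)})"
  proof -
  interpret mc m s t r using assms by (rule mc.intro)
  show ?thesis using main unfolding F_def .
qed

end
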